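(* Let $B$ be a locally compact Hausdorff space. The relative Stone--Čech compactification $\beta_B$ is a reflector, i.e. left adjoint to the inclusion functor $I\colon\mathrm{Prop}_B\hookrightarrow\mathrm{Top}_B$: for every $B$-space $(X,r)$, the space $\beta_BX$ with the anchor map $\beta_Br$ is a Hausdorff proper $B$-space, the canonical map $i\colon X\to\beta_BX$ is a $B$-map, and for every Hausdorff proper $B$-space $(X',r')$ and every $B$-map $f\colon X\to X'$ there is a unique $B$-map $f'\colon\beta_BX\to X'$ with $f'\circ i=f$.
   Context: A $B$-space is a topological space $Z$ with a continuous map $r\colon Z\to B$ (anchor map); it is proper if $r$ is proper. A $B$-map $(Z_1,r_1)\to(Z_2,r_2)$ is a continuous map $f$ with $r_2\circ f=r_1$. $\mathrm{Top}_B$ is the category of $B$-spaces and $B$-maps; $\mathrm{Prop}_B$ is its full subcategory of $B$-spaces $(Z,r)$ with $Z$ Hausdorff and $r$ proper. For a $B$-space $(X,r)$, let $H_X\subseteq\mathrm{C_b}(X)$ be the closed linear span of the products $f\cdot(h\circ r)$ with $f\in\mathrm{C_b}(X)$ (bounded continuous functions) and $h\in\mathrm C_0(B)$; this is a commutative C*-algebra. The relative Stone--Čech compactification $\beta_BX$ is the spectrum of $H_X$ (so $H_X\cong\mathrm C_0(\beta_BX)$); $i\colon X\to\beta_BX$ maps $x$ to the character $\varphi\mapsto\varphi(x)$ of $H_X$. The anchor map $\beta_Br\colon\beta_BX\to B$ is the unique continuous map with $\beta_Br\circ i=r$. *)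

theory Defs
  imports "HOL-Analysis.Analysis"
begin

definition Cb :: "'a topology \<Rightarrow> ('a \<Rightarrow> complex) set" where
  "Cb X = {f. continuous_map X euclidean f \<and> (\<exists>M. \<forall>x\<in>topspace X. norm (f x) \<le> M)
              \<and> (\<forall>x. x \<notin> topspace X \<longrightarrow> f x = 0)}"

definition C0 :: "'b topology \<Rightarrow> ('b \<Rightarrow> complex) set" where
  "C0 B = {h. continuous_map B euclidean h
              \<and> (\<forall>e>0. compactin B {b \<in> topspace B. norm (h b) \<ge> e})
              \<and> (\<forall>b. b \<notin> topspace B \<longrightarrow> h b = 0)}"

definition fspan :: "('a \<Rightarrow> complex) set \<Rightarrow> ('a \<Rightarrow> complex) set" where
  "fspan G = {(\<lambda>x. \<Sum>j<(n::nat). c j * u j x) | n c u. \<forall>j<n. u j \<in> G}"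

definition HX :: "'a topology \<Rightarrow> 'b topology \<Rightarrow> ('a \<Rightarrow> 'b) \<Rightarrow> ('a \<Rightarrow> complex) set" where
  "HX X B r = {g \<in> Cb X. \<forall>e>0. \<exists>s \<in> fspan {(\<lambda>x. f x * h (r x)) | f h. f \<in> Cb X \<and> h \<in> C0 B}.
                  \<forall>x\<in>topspace X. norm (g x - s x) \<le> e}"

definition characters :: "('a \<Rightarrow> complex) set \<Rightarrow> (('a \<Rightarrow> complex) \<Rightarrow> complex) set" where
  "characters H = {\<phi> \<in> H \<rightarrow>\<^sub>E UNIV.
      (\<forall>f\<in>H. \<forall>g\<in>H. \<phi> (\<lambda>x. f x + g x) = \<phi> f + \<phi> g)
    \<and> (\<forall>f\<in>H. \<forall>c. \<phi> (\<lambda>x. c * f x) = c * \<phi> f)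
    \<and> (\<forall>f\<in>H. \<forall>g\<in>H. \<phi> (\<lambda>x. f x * g x) = \<phi> f * \<phi> g)
    \<and> (\<exists>f\<in>H. \<phi> f \<noteq> 0)}"

text \<open>The relative Stone--Cech compactification: spectrum of H_X with the weak-* (Gelfand) topology,
  i.e. the subspace topology of the product topology on functions H_X \<rightarrow> complex.\<close>
definition betaB :: "'a topology \<Rightarrow> 'b topology \<Rightarrow> ('a \<Rightarrow> 'b) \<Rightarrow> (('a \<Rightarrow> complex) \<Rightarrow> complex) topology" where
  "betaB X B r = subtopology (product_topology (\<lambda>_. euclidean) (HX X B r)) (characters (HX X B r))"

definition beta_i :: "'a topology \<Rightarrow> 'b topology \<Rightarrow> ('a \<Rightarrow> 'b) \<Rightarrow> 'a \<Rightarrow> (('a \<Rightarrow> complex) \<Rightarrow> complex)" where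
  "beta_i X B r x = restrict (\<lambda>g. g x) (HX X B r)"

text \<open>The anchor map of beta_B X: the (unique) continuous map with beta_r o i = r.\<close>
definition beta_r :: "'a topology \<Rightarrow> 'b topology \<Rightarrow> ('a \<Rightarrow> 'b) \<Rightarrow> (('a \<Rightarrow> complex) \<Rightarrow> complex) \<Rightarrow> 'b" where
  "beta_r X B r = (SOME q. continuous_map (betaB X B r) B q
                     \<and> (\<forall>x\<in>topspace X. q (beta_i X B r x) = r x))"

end

theory Submission
  imports Defs
begin

lemma cm_mult [continuous_intros]:
  fixes f g :: "'a \<Rightarrow> 'b::real_normed_algebra"
  shows "continuous_map X euclidean f \<Longrightarrow> continuous_map X euclidean g \<Longrightarrow> continuous_map X euclidean (\<lambda>x. f x * g x)"
  by (simp add: continuous_map_atin tendsto_mult)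

lemma cm_inverse [continuous_intros]:
  fixes f :: "'a \<Rightarrow> 'b::real_normed_div_algebra"
  shows "continuous_map X euclidean f \<Longrightarrow> (\<And>x. x \<in> topspace X \<Longrightarrow> f x \<noteq> 0) \<Longrightarrow> continuous_map X euclidean (\<lambda>x. inverse (f x))"
  by (simp add: continuous_map_atin tendsto_inverse)

lemma cm_cnj [continuous_intros]:
  "continuous_map X euclidean f \<Longrightarrow> continuous_map X euclidean (\<lambda>x. cnj (f x))"
  by (simp add: continuous_map_atin tendsto_cnj)

lemma cm_of_real [continuous_intros]:
  "continuous_map X euclidean f \<Longrightarrow> continuous_map X euclidean (\<lambda>x. complex_of_real (f x))"
  by (simp add: continuous_map_atin tendsto_of_real)

lemma cm_Re [continuous_intros]:
  "continuous_map X euclidean f \<Longrightarrow> continuous_map X euclidean (\<lambda>x. Re (f x))"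
  by (simp add: continuous_map_atin tendsto_Re)

lemma compactin_bounded_norm:
  fixes h :: "'a \<Rightarrow> 'b::real_normed_vector"
  assumes "compactin Y K" "continuous_map Y euclidean h"
  obtains M where "M \<ge> 0" "\<And>y. y \<in> K \<Longrightarrow> norm (h y) \<le> M"
proof -
  have "compactin euclidean (h ` K)" using image_compactin assms by blast
  then have "compact (h ` K)" by (simp add: compactin_euclidean_iff)
  then have "bounded (h ` K)" by (rule compact_imp_bounded)
  then obtain M where "\<And>z. z \<in> h ` K \<Longrightarrow> norm z \<le> M" by (auto simp: bounded_iff)
  then show thesis by (intro that[of "max M 0"]) (auto simp: le_max_iff_disj)
qed

lemma CbI: "continuous_map X euclidean f \<Longrightarrow> (\<And>x. x \<in> topspace X \<Longrightarrow> norm (f x) \<le> M)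
   \<Longrightarrow> (\<And>x. x \<notin> topspace X \<Longrightarrow> f x = 0) \<Longrightarrow> f \<in> Cb X"
  unfolding Cb_def by blast

lemma Cb_cont: "f \<in> Cb X \<Longrightarrow> continuous_map X euclidean f"
  unfolding Cb_def by blast

lemma Cb_out: "f \<in> Cb X \<Longrightarrow> x \<notin> topspace X \<Longrightarrow> f x = 0"
  unfolding Cb_def by blast

lemma Cb_bound:
  assumes "f \<in> Cb X" obtains M where "M \<ge> 0" "\<And>x. x \<in> topspace X \<Longrightarrow> norm (f x) \<le> M"
proof -
  obtain M where "\<forall>x\<in>topspace X. norm (f x) \<le> M" using assms unfolding Cb_def by blast
  then show thesis by (intro that[of "max M 0"]) auto
qed

lemma Cb_add: assumes "f \<in> Cb X" "g \<in> Cb X" shows "(\<lambda>x. f x + g x) \<in> Cb X"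
proof -
  obtain M where M: "\<And>x. x \<in> topspace X \<Longrightarrow> norm (f x) \<le> M" using Cb_bound[OF assms(1)] by blast
  obtain N where N: "\<And>x. x \<in> topspace X \<Longrightarrow> norm (g x) \<le> N" using Cb_bound[OF assms(2)] by blast
  show ?thesis
  proof (rule CbI[where M="M+N"])
    show "continuous_map X euclidean (\<lambda>x. f x + g x)" by (intro continuous_map_add Cb_cont assms)
  next
    fix x assume "x \<in> topspace X"
    then show "norm (f x + g x) \<le> M + N"
      using M[of x] N[of x] norm_triangle_ineq[of "f x" "g x"] by simp
  qed (use Cb_out[OF assms(1)] Cb_out[OF assms(2)] in simp)
qed

lemma Cb_mult: assumes "f \<in> Cb X" "g \<in> Cb X" shows "(\<lambda>x. f x * g x) \<in> Cb X"
proof -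
  obtain M where M: "M \<ge> 0" "\<And>x. x \<in> topspace X \<Longrightarrow> norm (f x) \<le> M" using Cb_bound[OF assms(1)] by blast
  obtain N where N: "N \<ge> 0" "\<And>x. x \<in> topspace X \<Longrightarrow> norm (g x) \<le> N" using Cb_bound[OF assms(2)] by blast
  note MN = M N
  show ?thesis
  proof (rule CbI[where M="M*N"])
    show "continuous_map X euclidean (\<lambda>x. f x * g x)" by (intro cm_mult Cb_cont assms)
  next
    fix x assume "x \<in> topspace X"
    then show "norm (f x * g x) \<le> M * N"
      unfolding norm_mult using M N by (simp add: mult_mono)
  qed (use Cb_out[OF assms(1)] Cb_out[OF assms(2)] in simp)
qed

lemma Cb_scale: assumes "f \<in> Cb X" shows "(\<lambda>x. c * f x) \<in> Cb X"
proof -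
  obtain M where MN: "M \<ge> 0" "\<And>x. x \<in> topspace X \<Longrightarrow> norm (f x) \<le> M"
    using Cb_bound[OF assms(1)] by blast
  show ?thesis
  proof (rule CbI[where M="norm c*M"])
    show "continuous_map X euclidean (\<lambda>x. c * f x)" by (intro cm_mult Cb_cont assms continuous_map_const[THEN iffD2]) auto
  next
    fix x assume "x \<in> topspace X"
    then show "norm (c * f x) \<le> norm c * M"
      unfolding norm_mult using MN by (simp add: mult_left_mono)
  qed (use Cb_out[OF assms(1)] in simp)
qed

lemma Cb_cnj: assumes "f \<in> Cb X" shows "(\<lambda>x. cnj (f x)) \<in> Cb X"
proof -
  obtain M where MN: "M \<ge> 0" "\<And>x. x \<in> topspace X \<Longrightarrow> norm (f x) \<le> M"
    using Cb_bound[OF assms(1)] by blast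
  show ?thesis
  proof (rule CbI[where M="M"])
    show "continuous_map X euclidean (\<lambda>x. cnj (f x))" by (intro cm_cnj Cb_cont assms)
  next
    fix x assume "x \<in> topspace X"
    then show "norm (cnj (f x)) \<le> M" using MN by simp
  qed (use Cb_out[OF assms(1)] in simp)
qed

lemma Cb_zero: "(\<lambda>x. 0) \<in> Cb X"
  by (rule CbI[where M=0]) auto

lemma Cb_one: "(\<lambda>x. if x \<in> topspace X then 1 else 0) \<in> Cb X"
proof (rule CbI[where M=1])
  show "continuous_map X euclidean (\<lambda>x. if x \<in> topspace X then 1 else 0 :: complex)"
    by (rule continuous_map_eq[where f="\<lambda>x. 1"]) auto
qed auto

lemma C0_cont: "h \<in> C0 B \<Longrightarrow> continuous_map B euclidean h"
  unfolding C0_def by blast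

lemma C0_out: "h \<in> C0 B \<Longrightarrow> b \<notin> topspace B \<Longrightarrow> h b = 0"
  unfolding C0_def by blast

lemma C0_compact: "h \<in> C0 B \<Longrightarrow> e > 0 \<Longrightarrow> compactin B {b \<in> topspace B. norm (h b) \<ge> e}"
  unfolding C0_def by blast

lemma closedin_norm_ge:
  fixes h :: "'a \<Rightarrow> 'b::real_normed_vector"
  assumes "continuous_map B euclidean h"
  shows "closedin B {b \<in> topspace B. norm (h b) \<ge> e}"
proof -
  have "continuous_map B euclideanreal (\<lambda>b. norm (h b))" by (intro continuous_map_norm assms)
  then have "closedin B {b \<in> topspace B. (\<lambda>b. norm (h b)) b \<in> {e..}}"
    by (rule closedin_continuous_map_preimage) auto
  then show ?thesis by simp
qed

lemma C0_bound:
  assumes "h \<in> C0 B" obtains M where "M \<ge> 0" "\<And>b. b \<in> topspace B \<Longrightarrow> norm (h b) \<le> M"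
proof -
  obtain M where M: "M \<ge> 0" "\<And>b. b \<in> {b \<in> topspace B. norm (h b) \<ge> 1} \<Longrightarrow> norm (h b) \<le> M"
    using compactin_bounded_norm[OF C0_compact[OF assms, of 1] C0_cont[OF assms]] by auto
  show thesis
  proof (rule that[of "max M 1"])
    fix b assume "b \<in> topspace B"
    then show "norm (h b) \<le> max M 1" using M(2)[of b] by (cases "norm (h b) \<ge> 1") auto
  qed auto
qed

lemma C0_Cb: assumes "h \<in> C0 B" shows "h \<in> Cb B"
proof -
  obtain M where "M \<ge> 0" "\<And>b. b \<in> topspace B \<Longrightarrow> norm (h b) \<le> M" using C0_bound[OF assms] by blast
  then show ?thesis using CbI[OF C0_cont[OF assms]] C0_out[OF assms] by blast
qed

lemma C0I:
  assumes "continuous_map B euclidean h" "\<And>b. b \<notin> topspace B \<Longrightarrow> h b = 0"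
    "\<And>e. e > 0 \<Longrightarrow> \<exists>K. compactin B K \<and> {b \<in> topspace B. norm (h b) \<ge> e} \<subseteq> K"
  shows "h \<in> C0 B"
  unfolding C0_def
proof (intro CollectI conjI allI impI assms(1))
  fix e :: real assume "e > 0"
  then obtain K where "compactin B K" "{b \<in> topspace B. norm (h b) \<ge> e} \<subseteq> K" using assms(3) by blast
  then show "compactin B {b \<in> topspace B. e \<le> norm (h b)}"
    using closed_compactin closedin_norm_ge[OF assms(1)] by blast
qed (use assms in auto)

lemma C0_mult_Cb: assumes "h \<in> C0 B" "g \<in> Cb B" shows "(\<lambda>x. h x * g x) \<in> C0 B"
proof (rule C0I)
  show "continuous_map B euclidean (\<lambda>x. h x * g x)"
    by (intro cm_mult C0_cont Cb_cont assms)
  show "\<And>b. b \<notin> topspace B \<Longrightarrow> h b * g b = 0" using C0_out assms by auto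
  obtain M where M: "M \<ge> 0" "\<And>x. x \<in> topspace B \<Longrightarrow> norm (g x) \<le> M" using Cb_bound[OF assms(2)] by blast
  fix e :: real assume "e > 0"
  show "\<exists>K. compactin B K \<and> {b \<in> topspace B. e \<le> norm (h b * g b)} \<subseteq> K"
  proof (intro exI conjI)
    show "compactin B {b \<in> topspace B. e/(M+1) \<le> norm (h b)}"
      using C0_compact[OF assms(1)] \<open>e>0\<close> M by auto
    show "{b \<in> topspace B. e \<le> norm (h b * g b)} \<subseteq> {b \<in> topspace B. e/(M+1) \<le> norm (h b)}"
    proof clarify
      fix b assume b: "b \<in> topspace B" "e \<le> norm (h b * g b)"
      show "e / (M + 1) \<le> norm (h b)"
      proof (rule ccontr)
        assume "\<not> ?thesis"
        then have "norm (h b) * (M+1) < e" using M by (simp add: field_simps)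
        moreover have "norm (h b * g b) \<le> norm (h b) * (M+1)"
          using M(2)[OF b(1)] by (simp add: norm_mult mult_left_mono)
        ultimately show False using b by simp
      qed
    qed
  qed
qed

lemma C0_add: assumes "h \<in> C0 B" "g \<in> C0 B" shows "(\<lambda>x. h x + g x) \<in> C0 B"
proof (rule C0I)
  show "continuous_map B euclidean (\<lambda>x. h x + g x)"
    by (intro continuous_map_add C0_cont assms)
  show "\<And>b. b \<notin> topspace B \<Longrightarrow> h b + g b = 0" using C0_out[OF assms(1)] C0_out[OF assms(2)] by simp
  fix e :: real assume "e > 0"
  show "\<exists>K. compactin B K \<and> {b \<in> topspace B. e \<le> norm (h b + g b)} \<subseteq> K"
  proof (intro exI conjI)
    show "compactin B ({b \<in> topspace B. e/2 \<le> norm (h b)} \<union> {b \<in> topspace B. e/2 \<le> norm (g b)})"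
      using C0_compact[OF assms(1), of "e/2"] C0_compact[OF assms(2), of "e/2"] \<open>e>0\<close> by (intro compactin_Un) auto
    show "{b \<in> topspace B. e \<le> norm (h b + g b)} \<subseteq> {b \<in> topspace B. e/2 \<le> norm (h b)} \<union> {b \<in> topspace B. e/2 \<le> norm (g b)}"
    proof (rule subsetI)
      fix b assume b: "b \<in> {b \<in> topspace B. e \<le> norm (h b + g b)}"
      have "norm (h b + g b) \<le> norm (h b) + norm (g b)" by (rule norm_triangle_ineq)
      with b show "b \<in> {b \<in> topspace B. e/2 \<le> norm (h b)} \<union> {b \<in> topspace B. e/2 \<le> norm (g b)}"
        by auto
    qed
  qed
qed

lemma C0_scale: assumes "h \<in> C0 B" shows "(\<lambda>x. c * h x) \<in> C0 B"
proof -
  have "(\<lambda>x. h x * (\<lambda>x. if x \<in> topspace B then c else 0) x) \<in> C0 B"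
  proof (rule C0_mult_Cb[OF assms])
    have "(\<lambda>x. c * (\<lambda>x. if x \<in> topspace B then 1 else 0) x) \<in> Cb B" by (rule Cb_scale[OF Cb_one])
    moreover have "(\<lambda>x. c * (\<lambda>x. if x \<in> topspace B then 1 else 0) x) = (\<lambda>x. if x \<in> topspace B then c else 0)"
      by auto
    ultimately show "(\<lambda>x. if x \<in> topspace B then c else 0) \<in> Cb B" by simp
  qed
  moreover have "(\<lambda>x. h x * (\<lambda>x. if x \<in> topspace B then c else 0) x) = (\<lambda>x. c * h x)"
    using C0_out[OF assms] by (auto simp: fun_eq_iff)
  ultimately show ?thesis by simp
qed

lemma C0_cnj: assumes "h \<in> C0 B" shows "(\<lambda>x. cnj (h x)) \<in> C0 B"
  using assms cm_cnj[OF C0_cont[OF assms]] unfolding C0_def by auto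


definition Gens :: "'a topology \<Rightarrow> 'b topology \<Rightarrow> ('a \<Rightarrow> 'b) \<Rightarrow> ('a \<Rightarrow> complex) set" where
  "Gens X B r = {(\<lambda>x. f x * h (r x)) | f h. f \<in> Cb X \<and> h \<in> C0 B}"

lemma HX_alt: "HX X B r = {g \<in> Cb X. \<forall>e>0. \<exists>s \<in> fspan (Gens X B r). \<forall>x\<in>topspace X. norm (g x - s x) \<le> e}"
  by (simp add: HX_def Gens_def)

lemma fspanI: fixes n :: nat and c :: "nat \<Rightarrow> complex" shows "(\<And>j. j < n \<Longrightarrow> u j \<in> G) \<Longrightarrow> (\<lambda>x. \<Sum>j<n. c j * u j x) \<in> fspan G"
  unfolding fspan_def by blast

lemma fspanE:
  assumes "s \<in> fspan G"
  obtains n :: nat and c :: "nat \<Rightarrow> complex" and u where "\<And>j. j < n \<Longrightarrow> u j \<in> G" "s = (\<lambda>x. \<Sum>j<n. c j * u j x)"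
  using assms unfolding fspan_def by blast

lemma sum_lessThan_add_nat:
  "(\<Sum>j<m+n. F j) = (\<Sum>j<m. F j) + (\<Sum>j<n. F (m + j))" for F :: "nat \<Rightarrow> 'z::comm_monoid_add"
  by (induction n) (simp_all only: add_Suc_right sum.lessThan_Suc add.assoc add_0_right lessThan_0 sum.empty)

lemma fspan_add:
  assumes "s1 \<in> fspan G" "s2 \<in> fspan G" shows "(\<lambda>x. s1 x + s2 x) \<in> fspan G"
proof -
  obtain n1 :: nat and c1 u1 where 1: "\<And>j. j < n1 \<Longrightarrow> u1 j \<in> G" "s1 = (\<lambda>x. \<Sum>j<n1. c1 j * u1 j x)"
    using fspanE[OF assms(1)] by blast
  obtain n2 :: nat and c2 u2 where 2: "\<And>j. j < n2 \<Longrightarrow> u2 j \<in> G" "s2 = (\<lambda>x. \<Sum>j<n2. c2 j * u2 j x)"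
    using fspanE[OF assms(2)] by blast
  define c where "c j = (if j < n1 then c1 j else c2 (j - n1))" for j
  define u where "u j = (if j < n1 then u1 j else u2 (j - n1))" for j
  have "(\<lambda>x. \<Sum>j<n1+n2. c j * u j x) \<in> fspan G"
  proof (rule fspanI)
    fix j assume j: "j < n1 + n2"
    show "u j \<in> G"
    proof (cases "j < n1")
      case True then show ?thesis using 1(1) by (simp add: u_def)
    next
      case False
      then have "j - n1 < n2" using j by linarith
      then show ?thesis using 2(1) False by (simp add: u_def)
    qed
  qed
  moreover have "(\<lambda>x. \<Sum>j<n1+n2. c j * u j x) = (\<lambda>x. s1 x + s2 x)"
  proof
    fix x
    have "(\<Sum>j<n1+n2. c j * u j x) = (\<Sum>j<n1. c j * u j x) + (\<Sum>j<n2. c (n1+j) * u (n1+j) x)"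
      by (rule sum_lessThan_add_nat)
    also have "(\<Sum>j<n1. c j * u j x) = (\<Sum>j<n1. c1 j * u1 j x)"
      by (rule sum.cong) (simp_all add: c_def u_def)
    also have "(\<Sum>j<n2. c (n1+j) * u (n1+j) x) = (\<Sum>j<n2. c2 j * u2 j x)"
      by (simp add: c_def u_def)
    finally show "(\<Sum>j<n1+n2. c j * u j x) = s1 x + s2 x" using 1(2) 2(2) by simp
  qed
  ultimately show ?thesis by simp
qed

lemma fspan_scale:
  assumes "s \<in> fspan G" shows "(\<lambda>x. a * s x) \<in> fspan G"
proof -
  obtain n :: nat and c u where 1: "\<And>j. j < n \<Longrightarrow> u j \<in> G" "s = (\<lambda>x. \<Sum>j<n. c j * u j x)"
    using fspanE[OF assms(1)] by blast
  have "(\<lambda>x. \<Sum>j<n. (a * c j) * u j x) \<in> fspan G" by (rule fspanI) (use 1 in auto)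
  moreover have "(\<lambda>x. \<Sum>j<n. (a * c j) * u j x) = (\<lambda>x. a * s x)"
    unfolding 1 by (auto simp: sum_distrib_left mult.assoc)
  ultimately show ?thesis by simp
qed

lemma fspan_gen: "g \<in> G \<Longrightarrow> g \<in> fspan G"
  using fspanI[of "Suc 0" "\<lambda>_. g" G "\<lambda>_. 1"] by simp

lemma fspan_zero: "(\<lambda>x. 0) \<in> fspan G"
  using fspanI[of 0 "\<lambda>_. \<lambda>_. 0" G "\<lambda>_. 0"] by simp

lemma fspan_map:
  assumes "s \<in> fspan G" "\<And>g. g \<in> G \<Longrightarrow> (\<lambda>x. F x * g x) \<in> G"
  shows "(\<lambda>x. F x * s x) \<in> fspan G"
proof -
  obtain n :: nat and c u where 1: "\<And>j. j < n \<Longrightarrow> u j \<in> G" "s = (\<lambda>x. \<Sum>j<n. c j * u j x)"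
    using fspanE[OF assms(1)] by blast
  have "(\<lambda>x. \<Sum>j<n. c j * (\<lambda>x. F x * u j x) x) \<in> fspan G" by (rule fspanI) (use 1 assms(2) in auto)
  moreover have "(\<lambda>x. \<Sum>j<n. c j * (\<lambda>x. F x * u j x) x) = (\<lambda>x. F x * s x)"
    unfolding 1 by (auto simp: sum_distrib_left mult.assoc mult.left_commute)
  ultimately show ?thesis by simp
qed

lemma fspan_cnj:
  assumes "s \<in> fspan G" "\<And>g. g \<in> G \<Longrightarrow> (\<lambda>x. cnj (g x)) \<in> G"
  shows "(\<lambda>x. cnj (s x)) \<in> fspan G"
proof -
  obtain n :: nat and c u where 1: "\<And>j. j < n \<Longrightarrow> u j \<in> G" "s = (\<lambda>x. \<Sum>j<n. c j * u j x)"
    using fspanE[OF assms(1)] by blast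
  have "(\<lambda>x. \<Sum>j<n. cnj (c j) * (\<lambda>x. cnj (u j x)) x) \<in> fspan G" by (rule fspanI) (use 1 assms(2) in auto)
  moreover have "(\<lambda>x. \<Sum>j<n. cnj (c j) * (\<lambda>x. cnj (u j x)) x) = (\<lambda>x. cnj (s x))"
    unfolding 1 by (auto simp: cnj_sum)
  ultimately show ?thesis by simp
qed

lemma fspan_subset:
  assumes "s \<in> fspan G" "\<And>g. g \<in> G \<Longrightarrow> g \<in> H" "(\<lambda>x. 0) \<in> H"
    "\<And>f g. f \<in> H \<Longrightarrow> g \<in> H \<Longrightarrow> (\<lambda>x. f x + g x) \<in> H"
    "\<And>f a. f \<in> H \<Longrightarrow> (\<lambda>x. a * f x) \<in> H"
  shows "s \<in> H"
proof -
  obtain n :: nat and c u where 1: "\<And>j. j < n \<Longrightarrow> u j \<in> G" "s = (\<lambda>x. \<Sum>j<n. c j * u j x)"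
    using fspanE[OF assms(1)] by blast
  have "(\<lambda>x. \<Sum>j<m. c j * u j x) \<in> H" if "m \<le> n" for m
    using that
  proof (induction m)
    case 0 then show ?case using assms(3) by simp
  next
    case (Suc m)
    have a: "(\<lambda>x. \<Sum>j<m. c j * u j x) \<in> H" using Suc by simp
    have b: "u m \<in> H" using Suc 1 assms(2) by simp
    have "(\<lambda>x. (\<lambda>x. \<Sum>j<m. c j * u j x) x + (\<lambda>x. c m * u m x) x) \<in> H"
      by (rule assms(4)[OF a assms(5)[OF b]])
    then show ?case by simp
  qed
  then show ?thesis using 1 by simp
qed

locale bsp =
  fixes X :: "'a topology" and B :: "'b topology" and r :: "'a \<Rightarrow> 'b"
  assumes r: "continuous_map X B r"
begin

abbreviation "H \<equiv> HX X B r"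
abbreviation "G \<equiv> Gens X B r"

lemma r_top: "x \<in> topspace X \<Longrightarrow> r x \<in> topspace B"
  using continuous_map_image_subset_topspace[OF r] by blast

lemma gen_Cb: assumes "f \<in> Cb X" "h \<in> C0 B" shows "(\<lambda>x. f x * h (r x)) \<in> Cb X"
proof -
  obtain M where M: "M \<ge> 0" "\<And>x. x \<in> topspace X \<Longrightarrow> norm (f x) \<le> M" using Cb_bound[OF assms(1)] by blast
  obtain N where N: "N \<ge> 0" "\<And>b. b \<in> topspace B \<Longrightarrow> norm (h b) \<le> N" using C0_bound[OF assms(2)] by blast
  show ?thesis
  proof (rule CbI[where M="M*N"])
    have "continuous_map X euclidean (h \<circ> r)" by (rule continuous_map_compose[OF r C0_cont[OF assms(2)]])
    then show "continuous_map X euclidean (\<lambda>x. f x * h (r x))"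
      by (intro cm_mult Cb_cont[OF assms(1)]) (simp add: o_def)
  next
    fix x assume "x \<in> topspace X"
    then show "norm (f x * h (r x)) \<le> M * N"
      unfolding norm_mult using M N r_top by (simp add: mult_mono)
  qed (use Cb_out[OF assms(1)] in simp)
qed

lemma GensI: "f \<in> Cb X \<Longrightarrow> h \<in> C0 B \<Longrightarrow> g = (\<lambda>x. f x * h (r x)) \<Longrightarrow> g \<in> G"
  unfolding Gens_def mem_Collect_eq by (intro exI conjI)

lemma GensE: assumes "g \<in> G" obtains f h where "f \<in> Cb X" "h \<in> C0 B" "g = (\<lambda>x. f x * h (r x))"
  using assms unfolding Gens_def mem_Collect_eq by (elim exE conjE) (rule that)

lemma G_Cb: assumes "g \<in> G" shows "g \<in> Cb X"
proof -
  obtain f h where "f \<in> Cb X" "h \<in> C0 B" "g = (\<lambda>x. f x * h (r x))" by (rule GensE[OF assms])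
  then show ?thesis using gen_Cb by simp
qed

lemma span_Cb: "s \<in> fspan G \<Longrightarrow> s \<in> Cb X"
  apply (erule fspan_subset)
     apply (erule G_Cb)
    apply (rule Cb_zero)
   apply (erule (1) Cb_add)
  apply (erule Cb_scale)
  done

lemma G_mult: assumes "F \<in> Cb X" "g \<in> G" shows "(\<lambda>x. F x * g x) \<in> G"
proof -
  obtain f h where fh: "f \<in> Cb X" "h \<in> C0 B" "g = (\<lambda>x. f x * h (r x))" by (rule GensE[OF assms(2)])
  show ?thesis
  proof (rule GensI[OF Cb_mult[OF assms(1) fh(1)] fh(2)])
    show "(\<lambda>x. F x * g x) = (\<lambda>x. F x * f x * h (r x))" using fh(3) by (simp add: mult.assoc)
  qed
qed

lemma G_cnj: assumes "g \<in> G" shows "(\<lambda>x. cnj (g x)) \<in> G"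
proof -
  obtain f h where fh: "f \<in> Cb X" "h \<in> C0 B" "g = (\<lambda>x. f x * h (r x))" by (rule GensE[OF assms])
  show ?thesis
  proof (rule GensI[OF Cb_cnj[OF fh(1)] C0_cnj[OF fh(2)]])
    show "(\<lambda>x. cnj (g x)) = (\<lambda>x. cnj (f x) * cnj (h (r x)))" using fh(3) by simp
  qed
qed

lemma HX_Cb: "g \<in> H \<Longrightarrow> g \<in> Cb X"
  unfolding HX_alt by blast

lemma HX_approx: "g \<in> H \<Longrightarrow> e > 0 \<Longrightarrow> \<exists>s \<in> fspan G. \<forall>x\<in>topspace X. norm (g x - s x) \<le> e"
  unfolding HX_alt by blast

lemma HXI: "g \<in> Cb X \<Longrightarrow> (\<And>e. e > 0 \<Longrightarrow> \<exists>s \<in> fspan G. \<forall>x\<in>topspace X. norm (g x - s x) \<le> e) \<Longrightarrow> g \<in> H"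
  unfolding HX_alt by blast

lemma span_HX: "s \<in> fspan G \<Longrightarrow> s \<in> H"
proof (rule HXI[OF span_Cb])
  fix e :: real assume "s \<in> fspan G" "e > 0"
  then show "\<exists>s'\<in>fspan G. \<forall>x\<in>topspace X. norm (s x - s' x) \<le> e" by (intro bexI[of _ s]) auto
qed

lemma G_HX: "g \<in> G \<Longrightarrow> g \<in> H"
  by (intro span_HX fspan_gen)

lemma gen_HX: "f \<in> Cb X \<Longrightarrow> h \<in> C0 B \<Longrightarrow> (\<lambda>x. f x * h (r x)) \<in> H"
  by (rule G_HX, rule GensI) auto

lemma HX_closed:
  assumes "g \<in> Cb X" "\<And>e. e > 0 \<Longrightarrow> \<exists>g' \<in> H. \<forall>x\<in>topspace X. norm (g x - g' x) \<le> e"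
  shows "g \<in> H"
proof (rule HXI[OF assms(1)])
  fix e :: real assume "e > 0"
  then obtain g' where g': "g' \<in> H" "\<forall>x\<in>topspace X. norm (g x - g' x) \<le> e/2" using assms(2)[of "e/2"] by auto
  then obtain s where s: "s \<in> fspan G" "\<forall>x\<in>topspace X. norm (g' x - s x) \<le> e/2" using HX_approx[of g' "e/2"] \<open>e>0\<close> by auto
  have "norm (g x - s x) \<le> e" if "x \<in> topspace X" for x
  proof -
    have "g x - s x = (g x - g' x) + (g' x - s x)" by simp
    then have "norm (g x - s x) \<le> norm (g x - g' x) + norm (g' x - s x)" by (metis norm_triangle_ineq)
    moreover have "norm (g x - g' x) \<le> e/2" using g'(2) that by blast
    moreover have "norm (g' x - s x) \<le> e/2" using s(2) that by blast
    ultimately show ?thesis by linarith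
  qed
  then show "\<exists>s\<in>fspan G. \<forall>x\<in>topspace X. norm (g x - s x) \<le> e" using s by blast
qed

lemma HX_add: assumes "f \<in> H" "g \<in> H" shows "(\<lambda>x. f x + g x) \<in> H"
proof (rule HXI[OF Cb_add[OF HX_Cb[OF assms(1)] HX_Cb[OF assms(2)]]])
  fix e :: real assume "e > 0"
  then obtain s1 where s1: "s1 \<in> fspan G" "\<forall>x\<in>topspace X. norm (f x - s1 x) \<le> e/2" using HX_approx[OF assms(1), of "e/2"] by auto
  obtain s2 where s2: "s2 \<in> fspan G" "\<forall>x\<in>topspace X. norm (g x - s2 x) \<le> e/2" using HX_approx[OF assms(2), of "e/2"] \<open>e>0\<close> by auto
  have "norm (f x + g x - (s1 x + s2 x)) \<le> e" if "x \<in> topspace X" for x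
  proof -
    have "f x + g x - (s1 x + s2 x) = (f x - s1 x) + (g x - s2 x)" by simp
    then have "norm (f x + g x - (s1 x + s2 x)) \<le> norm (f x - s1 x) + norm (g x - s2 x)"
      by (metis norm_triangle_ineq)
    moreover have "norm (f x - s1 x) \<le> e/2" using s1(2) that by blast
    moreover have "norm (g x - s2 x) \<le> e/2" using s2(2) that by blast
    ultimately show ?thesis by linarith
  qed
  then show "\<exists>s\<in>fspan G. \<forall>x\<in>topspace X. norm (f x + g x - s x) \<le> e"
    using fspan_add[OF s1(1) s2(1)] by (intro bexI) auto
qed

lemma HX_ideal: assumes "F \<in> Cb X" "g \<in> H" shows "(\<lambda>x. F x * g x) \<in> H"
proof (rule HXI[OF Cb_mult[OF assms(1) HX_Cb[OF assms(2)]]])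
  obtain M where M: "M \<ge> 0" "\<And>x. x \<in> topspace X \<Longrightarrow> norm (F x) \<le> M" using Cb_bound[OF assms(1)] by blast
  fix e :: real assume "e > 0"
  then have e': "e/(M+1) > 0" using M by simp
  obtain s where s: "s \<in> fspan G" "\<forall>x\<in>topspace X. norm (g x - s x) \<le> e/(M+1)" using HX_approx[OF assms(2) e'] by auto
  have "norm (F x * g x - F x * s x) \<le> e" if "x \<in> topspace X" for x
  proof -
    have "norm (F x * g x - F x * s x) = norm (F x) * norm (g x - s x)"
      by (simp add: norm_mult[symmetric] right_diff_distrib)
    also have "\<dots> \<le> M * (e/(M+1))"
      using M(1) M(2)[OF that] s(2) that \<open>e>0\<close> by (intro mult_mono) auto
    also have "\<dots> \<le> e" using M \<open>e>0\<close> by (simp add: field_simps)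
    finally show ?thesis .
  qed
  then show "\<exists>s\<in>fspan G. \<forall>x\<in>topspace X. norm (F x * g x - s x) \<le> e"
    using fspan_map[OF s(1) G_mult[OF assms(1)]] by (intro bexI) auto
qed

lemma HX_mult: "f \<in> H \<Longrightarrow> g \<in> H \<Longrightarrow> (\<lambda>x. f x * g x) \<in> H"
  by (rule HX_ideal[OF HX_Cb])

lemma HX_scale: assumes "g \<in> H" shows "(\<lambda>x. a * g x) \<in> H"
proof -
  have "(\<lambda>x. (\<lambda>x. if x \<in> topspace X then a else 0) x * g x) \<in> H"
  proof (rule HX_ideal[OF _ assms])
    have "(\<lambda>x. a * (\<lambda>x. if x \<in> topspace X then 1 else 0) x) \<in> Cb X" by (rule Cb_scale[OF Cb_one])
    moreover have "(\<lambda>x. a * (\<lambda>x. if x \<in> topspace X then 1 else 0) x) = (\<lambda>x. if x \<in> topspace X then a else 0)"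
      by auto
    ultimately show "(\<lambda>x. if x \<in> topspace X then a else 0) \<in> Cb X" by simp
  qed
  moreover have "(\<lambda>x. (\<lambda>x. if x \<in> topspace X then a else 0) x * g x) = (\<lambda>x. a * g x)"
    using Cb_out[OF HX_Cb[OF assms]] by auto
  ultimately show ?thesis by simp
qed

lemma HX_cnj: assumes "g \<in> H" shows "(\<lambda>x. cnj (g x)) \<in> H"
proof (rule HXI[OF Cb_cnj[OF HX_Cb[OF assms]]])
  fix e :: real assume "e > 0"
  obtain s where s: "s \<in> fspan G" "\<forall>x\<in>topspace X. norm (g x - s x) \<le> e" using HX_approx[OF assms \<open>e>0\<close>] by auto
  have "norm (cnj (g x) - cnj (s x)) \<le> e" if "x \<in> topspace X" for x
  proof -
    have "cnj (g x) - cnj (s x) = cnj (g x - s x)" by simp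
    then have "norm (cnj (g x) - cnj (s x)) = norm (g x - s x)" by (simp only: complex_mod_cnj)
    then show ?thesis using s(2) that by simp
  qed
  then show "\<exists>s\<in>fspan G. \<forall>x\<in>topspace X. norm (cnj (g x) - s x) \<le> e"
    using fspan_cnj[OF s(1) G_cnj] by (intro bexI) auto
qed

lemma HX_zero: "(\<lambda>x. 0) \<in> H"
  by (rule span_HX[OF fspan_zero])

lemma HX_out: "g \<in> H \<Longrightarrow> x \<notin> topspace X \<Longrightarrow> g x = 0"
  by (rule Cb_out[OF HX_Cb])

lemma HX_diff: assumes "f \<in> H" "g \<in> H" shows "(\<lambda>x. f x - g x) \<in> H"
proof -
  have "(\<lambda>x. f x + (-1) * g x) \<in> H" by (rule HX_add[OF assms(1) HX_scale[OF assms(2)]])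
  moreover have "(\<lambda>x. f x + (-1) * g x) = (\<lambda>x. f x - g x)" by simp
  ultimately show ?thesis by simp
qed

lemma HX_sum: fixes n :: nat shows "(\<And>j. j < n \<Longrightarrow> v j \<in> H) \<Longrightarrow> (\<lambda>x. \<Sum>j<n. c j * v j x) \<in> H"
proof (induction n)
  case 0 then show ?case using HX_zero by simp
next
  case (Suc n)
  have a: "(\<lambda>x. \<Sum>j<n. c j * v j x) \<in> H" using Suc by simp
  have b: "v n \<in> H" using Suc by simp
  have "(\<lambda>x. (\<lambda>x. \<Sum>j<n. c j * v j x) x + (\<lambda>x. c n * v n x) x) \<in> H"
    by (rule HX_add[OF a HX_scale[OF b]])
  then show ?case by simp
qed

definition cext :: "('a \<Rightarrow> 'c) \<Rightarrow> ('c \<Rightarrow> complex) \<Rightarrow> 'a \<Rightarrow> complex" where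
  "cext f k = (\<lambda>x. if x \<in> topspace X then k (f x) else 0)"

lemma cext_r_HX: assumes "h \<in> C0 B" shows "cext r h \<in> H"
proof -
  have "(\<lambda>x. (\<lambda>x. if x \<in> topspace X then 1 else 0) x * h (r x)) \<in> H" by (rule gen_HX[OF Cb_one assms])
  moreover have "(\<lambda>x. (\<lambda>x. if x \<in> topspace X then 1 else 0) x * h (r x)) = cext r h"
    by (auto simp: cext_def)
  ultimately show ?thesis by simp
qed

end


lemma urysohn_lch:
  assumes lc: "locally_compact_space Y" and hd: "Hausdorff_space Y"
    and K: "compactin Y K" and U: "openin Y U" and KU: "K \<subseteq> U"
  obtains k where "k \<in> C0 Y" "\<And>y. y \<in> K \<Longrightarrow> k y = 1"
    "\<And>y. k y \<noteq> 0 \<Longrightarrow> y \<in> U" "\<And>y. Im (k y) = 0" "\<And>y. 0 \<le> Re (k y)" "\<And>y. Re (k y) \<le> 1"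
proof -
  have lcU: "locally_compact_space (subtopology Y U)"
    using locally_compact_space_open_subset hd lc U by blast
  have hdU: "Hausdorff_space (subtopology Y U)" using hd Hausdorff_space_subtopology by blast
  have KU': "compactin (subtopology Y U) K" using K KU by (simp add: compactin_subtopology)
  obtain V L where VL: "openin (subtopology Y U) V" "compactin (subtopology Y U) L"
      "K \<subseteq> V" "V \<subseteq> L"
    using lcU hdU KU' locally_compact_space_compact_closed_compact by metis
  have V: "openin Y V" using VL(1) U openin_trans_full by blast
  have L: "compactin Y L" "L \<subseteq> U" using VL(2) by (auto simp: compactin_subtopology)
  have cr: "completely_regular_space Y"
    using locally_compact_regular_imp_completely_regular_space lc hd by blast
  have "closedin Y (topspace Y - V)" using V by blast
  moreover have "disjnt K (topspace Y - V)" using VL(3) by (auto simp: disjnt_def)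
  ultimately obtain f where f: "continuous_map Y (subtopology euclideanreal {0..1}) f"
      "f ` (topspace Y - V) \<subseteq> {0}" "f ` K \<subseteq> {1}"
    using Urysohn_completely_regular_compact_closed[of 0 1 Y K "topspace Y - V"] cr K by auto
  have fc: "continuous_map Y euclideanreal f" using f(1) continuous_map_in_subtopology by blast
  have f01: "f y \<in> {0..1}" if "y \<in> topspace Y" for y
    using f(1) that continuous_map_image_subset_topspace by fastforce
  define k where "k y = (if y \<in> topspace Y then complex_of_real (f y) else 0)" for y
  show thesis
  proof (rule that)
    show "k \<in> C0 Y"
    proof (rule C0I)
      show "continuous_map Y euclidean k"
        by (rule continuous_map_eq[where f="\<lambda>y. complex_of_real (f y)"]) (auto simp: k_def intro: cm_of_real fc)
      show "\<And>b. b \<notin> topspace Y \<Longrightarrow> k b = 0" by (simp add: k_def)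
      fix e :: real assume "e > 0"
      show "\<exists>K. compactin Y K \<and> {b \<in> topspace Y. e \<le> norm (k b)} \<subseteq> K"
      proof (intro exI conjI)
        show "compactin Y L" by (rule L(1))
        show "{b \<in> topspace Y. e \<le> norm (k b)} \<subseteq> L"
        proof
          fix b assume b: "b \<in> {b \<in> topspace Y. e \<le> norm (k b)}"
          show "b \<in> L"
          proof (rule ccontr)
            assume "b \<notin> L"
            then have "b \<in> topspace Y - V" using b VL(4) by auto
            then have "f b = 0" using f(2) by auto
            then show False using b \<open>e>0\<close> by (auto simp: k_def)
          qed
        qed
      qed
    qed
    show "k y = 1" if "y \<in> K" for y
      using that f(3) compactin_subset_topspace[OF K] by (auto simp: k_def)
    show "y \<in> U" if "k y \<noteq> 0" for y
    proof (rule ccontr)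
      assume "y \<notin> U"
      then have "y \<notin> V" using VL(4) L(2) by auto
      then have "y \<notin> topspace Y \<or> f y = 0" using f(2) by auto
      then show False using that by (auto simp: k_def split: if_splits)
    qed
    show "Im (k y) = 0" for y by (simp add: k_def)
    show "0 \<le> Re (k y)" for y using f01[of y] by (simp add: k_def)
    show "Re (k y) \<le> 1" for y using f01[of y] by (simp add: k_def)
  qed
qed

lemma urysohn_point:
  assumes "locally_compact_space Y" "Hausdorff_space Y" "y \<in> topspace Y" "openin Y U" "y \<in> U"
  obtains k where "k \<in> C0 Y" "k y = 1" "\<And>z. k z \<noteq> 0 \<Longrightarrow> z \<in> U"
proof -
  have "compactin Y {y}" using assms(3) by simp
  then obtain k where "k \<in> C0 Y" "\<And>z. z \<in> {y} \<Longrightarrow> k z = 1" "\<And>z. k z \<noteq> 0 \<Longrightarrow> z \<in> U"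
    using urysohn_lch[of Y "{y}" U] assms by (metis empty_subsetI insert_subset)
  then show thesis using that by blast
qed

lemma C0_separates:
  assumes "locally_compact_space Y" "Hausdorff_space Y" "y \<in> topspace Y" "z \<in> topspace Y" "y \<noteq> z"
  obtains k where "k \<in> C0 Y" "k y = 1" "k z = 0"
proof -
  have "openin Y (topspace Y - {z})"
    using assms(2) Hausdorff_imp_t1_space t1_space_openin_delete_alt by blast
  then obtain k where "k \<in> C0 Y" "k y = 1" "\<And>w. k w \<noteq> 0 \<Longrightarrow> w \<in> topspace Y - {z}"
    using urysohn_point[OF assms(1,2,3)] assms(3,5) by blast
  then show thesis using that by blast
qed

context bsp
begin

lemma ch_PiE: "\<phi> \<in> characters H \<Longrightarrow> \<phi> \<in> H \<rightarrow>\<^sub>E UNIV"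
  unfolding characters_def by blast
lemma ch_add: "\<phi> \<in> characters H \<Longrightarrow> f \<in> H \<Longrightarrow> g \<in> H \<Longrightarrow> \<phi> (\<lambda>x. f x + g x) = \<phi> f + \<phi> g"
  unfolding characters_def by blast
lemma ch_scale: "\<phi> \<in> characters H \<Longrightarrow> f \<in> H \<Longrightarrow> \<phi> (\<lambda>x. c * f x) = c * \<phi> f"
  unfolding characters_def by blast
lemma ch_mult: "\<phi> \<in> characters H \<Longrightarrow> f \<in> H \<Longrightarrow> g \<in> H \<Longrightarrow> \<phi> (\<lambda>x. f x * g x) = \<phi> f * \<phi> g"
  unfolding characters_def by blast
lemma ch_nz: "\<phi> \<in> characters H \<Longrightarrow> \<exists>f\<in>H. \<phi> f \<noteq> 0"
  unfolding characters_def by blast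
lemma ch_out: "\<phi> \<in> characters H \<Longrightarrow> f \<notin> H \<Longrightarrow> \<phi> f = undefined"
  using ch_PiE PiE_arb by metis

lemma ch_zero: assumes "\<phi> \<in> characters H" shows "\<phi> (\<lambda>x. 0) = 0"
  using ch_scale[OF assms HX_zero, of 0] by simp

lemma ch_diff: assumes "\<phi> \<in> characters H" "f \<in> H" "g \<in> H" shows "\<phi> (\<lambda>x. f x - g x) = \<phi> f - \<phi> g"
proof -
  have 1: "\<phi> (\<lambda>x. f x + (-1) * g x) = \<phi> f + \<phi> (\<lambda>x. (-1) * g x)"
    by (rule ch_add[OF assms(1,2) HX_scale[OF assms(3)]])
  have 2: "\<phi> (\<lambda>x. (-1) * g x) = (-1) * \<phi> g" by (rule ch_scale[OF assms(1,3)])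
  have eq: "(\<lambda>x. f x + (-1) * g x) = (\<lambda>x. f x - g x)" by simp
  show ?thesis using 1 2 unfolding eq by simp
qed

lemma ch_sum:
  fixes n :: nat
  assumes "\<phi> \<in> characters H" "\<And>j. j < n \<Longrightarrow> v j \<in> H"
  shows "\<phi> (\<lambda>x. \<Sum>j<n. c j * v j x) = (\<Sum>j<n. c j * \<phi> (v j))"
  using assms(2)
proof (induction n)
  case 0 then show ?case using ch_zero[OF assms(1)] by simp
next
  case (Suc n)
  have a: "(\<lambda>x. \<Sum>j<n. c j * v j x) \<in> H" using Suc by (intro HX_sum) simp
  have b: "v n \<in> H" using Suc by simp
  have "\<phi> (\<lambda>x. (\<lambda>x. \<Sum>j<n. c j * v j x) x + (\<lambda>x. c n * v n x) x)
        = \<phi> (\<lambda>x. \<Sum>j<n. c j * v j x) + \<phi> (\<lambda>x. c n * v n x)"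
    by (rule ch_add[OF assms(1) a HX_scale[OF b]])
  also have "\<dots> = (\<Sum>j<n. c j * \<phi> (v j)) + c n * \<phi> (v n)"
    using Suc ch_scale[OF assms(1) b] by simp
  finally show ?case by simp
qed

lemma ch_bound:
  assumes phi: "\<phi> \<in> characters H" and g: "g \<in> H" and M: "M \<ge> 0"
    and gM: "\<And>x. x \<in> topspace X \<Longrightarrow> norm (g x) \<le> M"
  shows "norm (\<phi> g) \<le> M"
proof (rule ccontr)
  assume "\<not> ?thesis"
  then have lt: "M < norm (\<phi> g)" by simp
  define l where "l = \<phi> g"
  have l0: "l \<noteq> 0" using lt M l_def by auto
  define a where "a x = (1 / l) * g x" for x
  have aH: "a \<in> H" unfolding a_def[abs_def] by (rule HX_scale[OF g])
  have "\<phi> a = (1/l) * \<phi> g" unfolding a_def[abs_def] by (rule ch_scale[OF phi g])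
  then have phia: "\<phi> a = 1" using l0 l_def by simp
  define q where "q = M / norm l"
  have q1: "q < 1" "0 \<le> q" using lt M l0 by (auto simp: q_def l_def field_simps)
  have aq: "norm (a x) \<le> q" if "x \<in> topspace X" for x
    using gM[OF that] l0 by (simp add: a_def q_def norm_mult norm_divide divide_right_mono)
  have a1: "norm (a x - 1) \<ge> 1 - q" if "x \<in> topspace X" for x
  proof -
    have "norm (1::complex) \<le> norm (a x - 1) + norm (a x)"
      using norm_triangle_ineq4[of "a x" 1] norm_minus_commute[of "a x" 1] by (metis diff_add_cancel norm_triangle_ineq add.commute norm_minus_commute)
    then show ?thesis using aq[OF that] by simp
  qed
  define w where "w x = (if x \<in> topspace X then inverse (a x - 1) else 0)" for x
  have wCb: "w \<in> Cb X"
  proof (rule CbI[where M="1/(1-q)"])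
    have ac: "continuous_map X euclidean a" using HX_Cb[OF aH] Cb_cont by blast
    have "continuous_map X euclidean (\<lambda>x. inverse (a x - 1))"
    proof (rule cm_inverse)
      show "continuous_map X euclidean (\<lambda>x. a x - 1)" by (intro continuous_map_diff ac) simp
      show "\<And>x. x \<in> topspace X \<Longrightarrow> a x - 1 \<noteq> 0" using a1 q1 by fastforce
    qed
    then show "continuous_map X euclidean w"
      by (rule continuous_map_eq) (simp add: w_def)
    fix x assume x: "x \<in> topspace X"
    have "norm (inverse (a x - 1)) = inverse (norm (a x - 1))" by (simp add: norm_inverse)
    also have "\<dots> \<le> inverse (1 - q)" using a1[OF x] q1 by (intro le_imp_inverse_le) auto
    finally show "norm (w x) \<le> 1 / (1 - q)" using x by (simp add: w_def divide_inverse)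
  qed (simp add: w_def)
  define u where "u x = w x * a x" for x
  have uH: "u \<in> H" unfolding u_def[abs_def] by (rule HX_ideal[OF wCb aH])
  have auH: "(\<lambda>x. a x * u x) \<in> H" by (rule HX_mult[OF aH uH])
  have "\<phi> (\<lambda>x. u x - a x * u x) = \<phi> u - \<phi> a * \<phi> u"
    using ch_diff[OF phi uH auH] ch_mult[OF phi aH uH] by simp
  also have "\<dots> = 0" using phia by simp
  finally have z: "\<phi> (\<lambda>x. u x - a x * u x) = 0" .
  have eq: "(\<lambda>x. u x - a x * u x) = (\<lambda>x. (-1) * a x)"
  proof
    fix x show "u x - a x * u x = (-1) * a x"
    proof (cases "x \<in> topspace X")
      case True
      then have "a x - 1 \<noteq> 0" using a1 q1 by fastforce
      then have inv: "(a x - 1) * inverse (a x - 1) = 1" by simp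
      have "u x - a x * u x = - ((a x - 1) * inverse (a x - 1)) * a x"
        using True by (simp add: u_def w_def algebra_simps)
      then show ?thesis using inv by simp
    next
      case False
      then show ?thesis using HX_out[OF aH False] by (simp add: u_def w_def)
    qed
  qed
  have "\<phi> (\<lambda>x. (-1) * a x) = -1" using ch_scale[OF phi aH, of "-1"] phia by simp
  then show False using z eq by simp
qed

lemma HX_bound: assumes "g \<in> H" obtains M where "M \<ge> 0" "\<And>x. x \<in> topspace X \<Longrightarrow> norm (g x) \<le> M"
  using Cb_bound[OF HX_Cb[OF assms]] by blast

lemma ch_some_h:
  assumes phi: "\<phi> \<in> characters H"
  shows "\<exists>h\<in>C0 B. \<phi> (cext r h) \<noteq> 0"
proof (rule ccontr)
  assume "\<not> ?thesis"
  then have vanish: "\<And>h. h \<in> C0 B \<Longrightarrow> \<phi> (cext r h) = 0" by blast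
  obtain g where g: "g \<in> H" "\<phi> g \<noteq> 0" using ch_nz[OF phi] by blast
  obtain Mg where Mg: "Mg \<ge> 0" "\<And>x. x \<in> topspace X \<Longrightarrow> norm (g x) \<le> Mg" using HX_bound[OF g(1)] by blast
  have c1: "\<phi> (\<lambda>x. g x * u x) = 0" if u: "u \<in> G" for u
  proof -
    obtain f h where fh: "f \<in> Cb X" "h \<in> C0 B" "u = (\<lambda>x. f x * h (r x))" by (rule GensE[OF u])
    have gf: "(\<lambda>x. f x * g x) \<in> H" by (rule HX_ideal[OF fh(1) g(1)])
    have "(\<lambda>x. g x * u x) = (\<lambda>x. (\<lambda>x. f x * g x) x * cext r h x)"
    proof
      fix x show "g x * u x = (\<lambda>x. f x * g x) x * cext r h x"
        using HX_out[OF g(1), of x] fh(3) by (cases "x \<in> topspace X") (auto simp: cext_def)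
    qed
    then have "\<phi> (\<lambda>x. g x * u x) = \<phi> (\<lambda>x. f x * g x) * \<phi> (cext r h)"
      using ch_mult[OF phi gf cext_r_HX[OF fh(2)]] by simp
    then show ?thesis using vanish[OF fh(2)] by simp
  qed
  have c2: "\<phi> (\<lambda>x. g x * s x) = 0" if s: "s \<in> fspan G" for s
  proof -
    obtain n :: nat and c u where nu: "\<And>j. j < n \<Longrightarrow> u j \<in> G" "s = (\<lambda>x. \<Sum>j<n. c j * u j x)"
      using fspanE[OF s] by blast
    have "(\<lambda>x. g x * s x) = (\<lambda>x. \<Sum>j<n. c j * (\<lambda>x. g x * u j x) x)"
      by (auto simp: nu(2) sum_distrib_left mult.left_commute)
    moreover have "\<phi> (\<lambda>x. \<Sum>j<n. c j * (\<lambda>x. g x * u j x) x) = (\<Sum>j<n. c j * \<phi> (\<lambda>x. g x * u j x))"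
      by (rule ch_sum[OF phi]) (intro HX_mult[OF g(1)] G_HX nu(1))
    moreover have "(\<Sum>j<n. c j * \<phi> (\<lambda>x. g x * u j x)) = 0"
      using c1 nu(1) by simp
    ultimately show ?thesis by simp
  qed
  have c3: "norm (\<phi> g) ^ 2 \<le> Mg * e" if e: "e > 0" for e
  proof -
    obtain s where s: "s \<in> fspan G" "\<forall>x\<in>topspace X. norm (g x - s x) \<le> e" using HX_approx[OF g(1) e] by blast
    have sH: "s \<in> H" by (rule span_HX[OF s(1)])
    have ggH: "(\<lambda>x. g x * g x) \<in> H" by (rule HX_mult[OF g(1) g(1)])
    have gsH: "(\<lambda>x. g x * s x) \<in> H" by (rule HX_mult[OF g(1) sH])
    have "\<phi> (\<lambda>x. g x * g x - g x * s x) = \<phi> g * \<phi> g"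
      using ch_diff[OF phi ggH gsH] ch_mult[OF phi g(1) g(1)] c2[OF s(1)] by simp
    moreover have "norm (\<phi> (\<lambda>x. g x * g x - g x * s x)) \<le> Mg * e"
    proof (rule ch_bound[OF phi HX_diff[OF ggH gsH]])
      show "0 \<le> Mg * e" using Mg e by simp
      fix x assume x: "x \<in> topspace X"
      have "norm (g x * g x - g x * s x) = norm (g x) * norm (g x - s x)"
        by (simp add: norm_mult[symmetric] right_diff_distrib)
      also have "\<dots> \<le> Mg * e" using Mg(2)[OF x] s(2) x Mg(1) by (intro mult_mono) auto
      finally show "norm (g x * g x - g x * s x) \<le> Mg * e" .
    qed
    ultimately show ?thesis by (simp add: norm_mult power2_eq_square)
  qed
  define p where "p = norm (\<phi> g) ^ 2"
  have p0: "p > 0" using g(2) by (simp add: p_def)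
  have "p \<le> Mg * (p / (Mg + 1))" using c3[of "p / (Mg+1)"] p0 Mg by (simp add: p_def)
  moreover have "Mg * (p / (Mg + 1)) < p" using p0 Mg by (simp add: field_simps)
  ultimately show False by simp
qed

end


lemma C0_zero: "(\<lambda>y. 0) \<in> C0 Y"
  by (rule C0I) auto

lemma C0_diff: assumes "h \<in> C0 B" "g \<in> C0 B" shows "(\<lambda>x. h x - g x) \<in> C0 B"
proof -
  have "(\<lambda>x. h x + (-1) * g x) \<in> C0 B" by (rule C0_add[OF assms(1) C0_scale[OF assms(2)]])
  moreover have "(\<lambda>x. h x + (-1) * g x) = (\<lambda>x. h x - g x)" by simp
  ultimately show ?thesis by simp
qed

lemma C0_mult: "h \<in> C0 B \<Longrightarrow> g \<in> C0 B \<Longrightarrow> (\<lambda>x. h x * g x) \<in> C0 B"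
  by (rule C0_mult_Cb[OF _ C0_Cb])

lemma openin_nonzero:
  assumes "continuous_map Y euclidean (k :: 'y \<Rightarrow> complex)"
  shows "openin Y {y \<in> topspace Y. k y \<noteq> 0}"
proof -
  have "openin Y {y \<in> topspace Y. k y \<in> - {0}}"
    by (rule openin_continuous_map_preimage[OF assms]) auto
  then show ?thesis by simp
qed

lemma C0_unique_point:
  assumes "locally_compact_space Y" "Hausdorff_space Y" "y \<in> topspace Y" "z \<in> topspace Y"
    "\<And>k. k \<in> C0 Y \<Longrightarrow> k y = k z"
  shows "y = z"
proof (rule ccontr)
  assume "y \<noteq> z"
  then obtain k where "k \<in> C0 Y" "k y = 1" "k z = 0" using C0_separates assms by metis
  then show False using assms(5)[of k] by simp
qed

lemma point_lemma:
  fixes \<psi> :: "('y \<Rightarrow> complex) \<Rightarrow> complex"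
  assumes lc: "locally_compact_space Y" and hd: "Hausdorff_space Y"
    and add: "\<And>k k'. k \<in> C0 Y \<Longrightarrow> k' \<in> C0 Y \<Longrightarrow> \<psi> (\<lambda>y. k y + k' y) = \<psi> k + \<psi> k'"
    and scale: "\<And>k c. k \<in> C0 Y \<Longrightarrow> \<psi> (\<lambda>y. c * k y) = c * \<psi> k"
    and mult: "\<And>k k'. k \<in> C0 Y \<Longrightarrow> k' \<in> C0 Y \<Longrightarrow> \<psi> (\<lambda>y. k y * k' y) = \<psi> k * \<psi> k'"
    and bound: "\<And>k M. k \<in> C0 Y \<Longrightarrow> M \<ge> 0 \<Longrightarrow> (\<And>y. y \<in> topspace Y \<Longrightarrow> norm (k y) \<le> M) \<Longrightarrow> norm (\<psi> k) \<le> M"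
    and nz: "\<exists>k\<in>C0 Y. \<psi> k \<noteq> 0"
  shows "\<exists>y\<in>topspace Y. \<forall>k\<in>C0 Y. \<psi> k = k y"
proof -
  have diff: "\<psi> (\<lambda>y. k y - k' y) = \<psi> k - \<psi> k'" if "k \<in> C0 Y" "k' \<in> C0 Y" for k k'
  proof -
    have 1: "\<psi> (\<lambda>y. k y + (-1) * k' y) = \<psi> k + \<psi> (\<lambda>y. (-1) * k' y)"
      by (rule add[OF that(1) C0_scale[OF that(2)]])
    have 2: "\<psi> (\<lambda>y. (-1) * k' y) = (-1) * \<psi> k'" by (rule scale[OF that(2)])
    have eq: "(\<lambda>y. k y + (-1) * k' y) = (\<lambda>y. k y - k' y)" by simp
    show ?thesis using 1 2 unfolding eq by simp
  qed
  have zero: "\<psi> (\<lambda>y. 0) = 0" using scale[OF C0_zero, of 0] by simp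
  obtain k1 where k1: "k1 \<in> C0 Y" "\<psi> k1 \<noteq> 0" using nz by blast
  define k0 where "k0 y = (1 / \<psi> k1) * k1 y" for y
  have k0: "k0 \<in> C0 Y" unfolding k0_def[abs_def] by (rule C0_scale[OF k1(1)])
  have "\<psi> k0 = (1 / \<psi> k1) * \<psi> k1" unfolding k0_def[abs_def] by (rule scale[OF k1(1)])
  then have psik0: "\<psi> k0 = 1" using k1 by simp
  define Kern where "Kern = {k \<in> C0 Y. \<psi> k = 0}"
  have claim: "\<exists>y\<in>topspace Y. \<forall>k\<in>Kern. k y = 0"
  proof (rule ccontr)
    assume "\<not> ?thesis"
    then have cov: "\<And>y. y \<in> topspace Y \<Longrightarrow> \<exists>k\<in>Kern. k y \<noteq> 0" by blast
    define Opn where "Opn k = {y \<in> topspace Y. k y \<noteq> 0}" for k :: "'y \<Rightarrow> complex"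
    define Ks where "Ks = {y \<in> topspace Y. norm (k0 y) \<ge> 1/2}"
    have Ks: "compactin Y Ks" unfolding Ks_def using C0_compact[OF k0, of "1/2"] by simp
    have "\<forall>U\<in>Opn ` Kern. openin Y U"
      using openin_nonzero C0_cont unfolding Opn_def Kern_def by blast
    moreover have "Ks \<subseteq> \<Union>(Opn ` Kern)"
      using cov unfolding Ks_def Opn_def by blast
    ultimately obtain F where F: "finite F" "F \<subseteq> Opn ` Kern" "Ks \<subseteq> \<Union>F"
      using Ks unfolding compactin_def by meson
    then obtain Fk where Fk: "finite Fk" "Fk \<subseteq> Kern" "F = Opn ` Fk"
      by (meson finite_subset_image)
    have sos: "\<exists>P\<in>C0 Y. \<psi> P = 0 \<and> (\<forall>y. Im (P y) = 0 \<and> 0 \<le> Re (P y)) \<and> (\<forall>k\<in>S. \<forall>y. (norm (k y))^2 \<le> Re (P y))"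
      if "finite S" "S \<subseteq> Kern" for S
      using that
    proof (induction S rule: finite_induct)
      case empty
      show ?case by (intro bexI[of _ "\<lambda>y. 0"] conjI) (auto simp: zero C0_zero)
    next
      case (insert k S)
      then obtain P where P: "P \<in> C0 Y" "\<psi> P = 0" "\<forall>y. Im (P y) = 0 \<and> 0 \<le> Re (P y)"
          "\<forall>k\<in>S. \<forall>y. (norm (k y))^2 \<le> Re (P y)" by auto
      have k: "k \<in> C0 Y" "\<psi> k = 0" using insert.prems unfolding Kern_def by auto
      have kc: "(\<lambda>y. cnj (k y)) \<in> C0 Y" by (rule C0_cnj[OF k(1)])
      have kkc: "(\<lambda>y. k y * cnj (k y)) \<in> C0 Y" by (rule C0_mult[OF k(1) kc])
      define P' where "P' y = P y + k y * cnj (k y)" for y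
      have eqn: "k y * cnj (k y) = complex_of_real ((norm (k y))^2)" for y
        by (metis complex_norm_square of_real_power)
      show ?case
      proof (intro bexI[of _ P'] conjI ballI allI)
        show "P' \<in> C0 Y" unfolding P'_def[abs_def] by (rule C0_add[OF P(1) kkc])
        have "\<psi> P' = \<psi> P + \<psi> (\<lambda>y. k y * cnj (k y))" unfolding P'_def[abs_def] by (rule add[OF P(1) kkc])
        also have "\<dots> = 0" using P(2) mult[OF k(1) kc] k(2) by simp
        finally show "\<psi> P' = 0" .
        fix y
        show "Im (P' y) = 0" using P(3) by (simp add: P'_def eqn)
        show "0 \<le> Re (P' y)" using P(3) by (simp add: P'_def eqn)
        fix k'' assume "k'' \<in> insert k S"
        then show "(norm (k'' y))^2 \<le> Re (P' y)"
        proof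
          assume "k'' = k" then show ?thesis using P(3) by (simp add: P'_def eqn)
        next
          assume "k'' \<in> S" then show ?thesis using P(3,4) by (simp add: P'_def eqn) (smt (verit) zero_le_power2)
        qed
      qed
    qed
    obtain P where P: "P \<in> C0 Y" "\<psi> P = 0" "\<And>y. Im (P y) = 0" "\<And>y. 0 \<le> Re (P y)"
        "\<And>k y. k \<in> Fk \<Longrightarrow> (norm (k y))^2 \<le> Re (P y)"
    proof -
      from sos[OF Fk(1,2)] obtain P where Pc: "P \<in> C0 Y" and
        Pr: "\<psi> P = 0 \<and> (\<forall>y. Im (P y) = 0 \<and> 0 \<le> Re (P y)) \<and> (\<forall>k\<in>Fk. \<forall>y. (norm (k y))^2 \<le> Re (P y))"
        by (elim bexE)
      show thesis
      proof (rule that[OF Pc])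
        show "\<psi> P = 0" using Pr by simp
        show "\<And>y. Im (P y) = 0" using Pr by simp
        show "\<And>y. 0 \<le> Re (P y)" using Pr by simp
        show "\<And>k y. k \<in> Fk \<Longrightarrow> (norm (k y))^2 \<le> Re (P y)" using Pr by simp
      qed
    qed
    have Ppos: "Re (P y) > 0" if "y \<in> Ks" for y
    proof -
      have "y \<in> \<Union>(Opn ` Fk)" using F(3) Fk(3) that by blast
      then obtain k where "k \<in> Fk" "y \<in> Opn k" by blast
      then have "k y \<noteq> 0" "(norm (k y))^2 \<le> Re (P y)" using P(5) unfolding Opn_def by auto
      then show ?thesis by (smt (verit) zero_less_norm_iff zero_less_power)
    qed
    have PRe: "P y = complex_of_real (Re (P y))" for y using P(3)[of y] by (simp add: complex_eq_iff)
    have cRe: "continuous_map Y euclideanreal (\<lambda>y. Re (P y))" by (intro cm_Re C0_cont[OF P(1)])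
    obtain \<delta> where \<delta>: "\<delta> > 0" "\<And>y. y \<in> Ks \<Longrightarrow> \<delta> \<le> Re (P y)"
    proof (cases "Ks = {}")
      case True then show thesis using that[of 1] by simp
    next
      case False
      have "compactin euclideanreal ((\<lambda>y. Re (P y)) ` Ks)" by (rule image_compactin[OF Ks cRe])
      then have "compact ((\<lambda>y. Re (P y)) ` Ks)" by (simp add: compactin_euclidean_iff)
      then obtain m where m: "m \<in> (\<lambda>y. Re (P y)) ` Ks" "\<And>z. z \<in> (\<lambda>y. Re (P y)) ` Ks \<Longrightarrow> m \<le> z"
        using compact_attains_inf False by (metis image_is_empty)
      then obtain y0 where "y0 \<in> Ks" "m = Re (P y0)" by blast
      then have "m > 0" using Ppos by simp
      then show thesis using that[of m] m(2) by blast
    qed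
    define mx where "mx y = max (Re (P y)) \<delta>" for y
    have mxpos: "mx y > 0" for y using \<delta> by (simp add: mx_def)
    define Fm where "Fm y = (if y \<in> topspace Y then complex_of_real (inverse (mx y)) else 0)" for y
    have Fm: "Fm \<in> Cb Y"
    proof (rule CbI[where M="inverse \<delta>"])
      have "continuous_map Y euclideanreal (\<lambda>y. inverse (mx y))"
      proof (rule continuous_map_real_inverse)
        show "continuous_map Y euclideanreal mx" unfolding mx_def[abs_def]
          by (intro continuous_map_real_max cRe) simp
        show "\<And>y. y \<in> topspace Y \<Longrightarrow> mx y \<noteq> 0" using mxpos by (metis less_irrefl)
      qed
      then have "continuous_map Y euclidean (\<lambda>y. complex_of_real (inverse (mx y)))" by (rule cm_of_real)
      then show "continuous_map Y euclidean Fm" by (rule continuous_map_eq) (simp add: Fm_def)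
      fix y assume "y \<in> topspace Y"
      have "inverse (mx y) \<le> inverse \<delta>" using \<delta> by (intro le_imp_inverse_le) (auto simp: mx_def)
      moreover have "norm (Fm y) = inverse (mx y)" using mxpos[of y] \<open>y \<in> topspace Y\<close>
        unfolding Fm_def by (simp only: if_True norm_of_real) simp
      ultimately show "norm (Fm y) \<le> inverse \<delta>" by simp
    qed (simp add: Fm_def)
    define m where "m y = k0 y * Fm y" for y
    have m: "m \<in> C0 Y" unfolding m_def[abs_def] by (rule C0_mult_Cb[OF k0 Fm])
    define Pm where "Pm y = P y * m y" for y
    have Pm: "Pm \<in> C0 Y" unfolding Pm_def[abs_def] by (rule C0_mult[OF P(1) m])
    have psiPm: "\<psi> Pm = 0" unfolding Pm_def[abs_def] using mult[OF P(1) m] P(2) by simp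
    define D where "D y = k0 y - Pm y" for y
    have D: "D \<in> C0 Y" unfolding D_def[abs_def] by (rule C0_diff[OF k0 Pm])
    have psiD: "\<psi> D = 1" unfolding D_def[abs_def] using diff[OF k0 Pm] psik0 psiPm by simp
    have "norm (\<psi> D) \<le> 1/2"
    proof (rule bound[OF D])
      fix y assume y: "y \<in> topspace Y"
      define p where "p = Re (P y)"
      have p0: "p \<ge> 0" using P(4) by (simp add: p_def)
      have Dy: "D y = k0 y * complex_of_real (1 - p / mx y)"
        using y PRe[of y] by (simp add: D_def Pm_def m_def Fm_def p_def algebra_simps divide_inverse)
      have f01: "0 \<le> 1 - p / mx y" "1 - p / mx y \<le> 1"
        using mxpos[of y] p0 by (auto simp: mx_def p_def field_simps)
      show "norm (D y) \<le> 1/2"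
      proof (cases "y \<in> Ks")
        case True
        then have "mx y = p" using \<delta>(2) by (simp add: mx_def p_def)
        then have "1 - p / mx y = 0" using mxpos[of y] by simp
        then show ?thesis using Dy by simp
      next
        case False
        then have "norm (k0 y) < 1/2" using y unfolding Ks_def by auto
        moreover have "norm (D y) = norm (k0 y) * (1 - p / mx y)"
        proof -
          have "norm (D y) = norm (k0 y) * norm (complex_of_real (1 - p / mx y))" unfolding Dy by (rule norm_mult)
          moreover have "norm (complex_of_real (1 - p / mx y)) = 1 - p / mx y"
            by (subst norm_of_real) (use f01 in simp)
          ultimately show ?thesis by simp
        qed
        ultimately show ?thesis using f01 by (smt (verit) mult_left_le norm_ge_zero)
      qed
    qed simp
    then show False using psiD by simp
  qed
  then obtain y where y: "y \<in> topspace Y" "\<And>k. k \<in> Kern \<Longrightarrow> k y = 0" by blast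
  have rep: "k y = \<psi> k * k0 y" if k: "k \<in> C0 Y" for k
  proof -
    have "(\<lambda>z. k z - \<psi> k * k0 z) \<in> C0 Y" by (rule C0_diff[OF k C0_scale[OF k0]])
    moreover have "\<psi> (\<lambda>z. k z - \<psi> k * k0 z) = 0"
      using diff[OF k C0_scale[OF k0]] scale[OF k0] psik0 by simp
    ultimately have "(\<lambda>z. k z - \<psi> k * k0 z) \<in> Kern" unfolding Kern_def by blast
    then show ?thesis using y(2) by fastforce
  qed
  have "k0 y * k0 y = \<psi> (\<lambda>z. k0 z * k0 z) * k0 y" using rep[OF C0_mult[OF k0 k0]] by simp
  then have "k0 y * k0 y = k0 y" using mult[OF k0 k0] psik0 by simp
  then have k0y: "k0 y = 0 \<or> k0 y = 1" by (metis mult_cancel_right1 mult_eq_0_iff)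
  obtain kk where kk: "kk \<in> C0 Y" "kk y = 1" "\<And>z. kk z \<noteq> 0 \<Longrightarrow> z \<in> topspace Y"
    using urysohn_point[OF lc hd y(1), of "topspace Y"] y(1) by blast
  have "k0 y = 1"
  proof (rule ccontr)
    assume "k0 y \<noteq> 1"
    then have "k0 y = 0" using k0y by blast
    then have "kk y = 0" using rep[OF kk(1)] by simp
    then show False using kk(2) by simp
  qed
  then show ?thesis using rep y(1) by auto
qed


context bsp
begin

definition ptmap :: "'c topology \<Rightarrow> ('a \<Rightarrow> 'c) \<Rightarrow> (('a \<Rightarrow> complex) \<Rightarrow> complex) \<Rightarrow> 'c" where
  "ptmap Y f \<phi> = (THE y. y \<in> topspace Y \<and> (\<forall>k\<in>C0 Y. \<phi> (cext f k) = k y))"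

lemma characters_PiE: "characters H \<subseteq> H \<rightarrow>\<^sub>E UNIV"
  unfolding characters_def by blast

lemma topspace_betaB: "topspace (betaB X B r) = characters H"
  unfolding betaB_def using characters_PiE by (auto simp: topspace_product_topology)

lemma ev_cont: "g \<in> H \<Longrightarrow> continuous_map (betaB X B r) euclidean (\<lambda>\<phi>. \<phi> g)"
  unfolding betaB_def
  by (rule continuous_map_from_subtopology) (rule continuous_map_product_projection[where X="\<lambda>_. euclidean", simplified])

lemma cext_add: "cext f (\<lambda>y. k y + k' y) = (\<lambda>x. cext f k x + cext f k' x)"
  by (auto simp: cext_def fun_eq_iff)
lemma cext_scale: "cext f (\<lambda>y. c * k y) = (\<lambda>x. c * cext f k x)"
  by (auto simp: cext_def fun_eq_iff)
lemma cext_mult: "cext f (\<lambda>y. k y * k' y) = (\<lambda>x. cext f k x * cext f k' x)"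
  by (auto simp: cext_def fun_eq_iff)

end

locale bspLC = bsp +
  assumes lcB: "locally_compact_space B" and hdB: "Hausdorff_space B"
begin

lemma beta_i_char: assumes x: "x \<in> topspace X" shows "beta_i X B r x \<in> characters H"
proof -
  obtain h where h: "h \<in> C0 B" "h (r x) = 1"
    using urysohn_point[OF lcB hdB r_top[OF x], of "topspace B"] r_top[OF x] by blast
  have "cext r h x = 1" using h x by (simp add: cext_def)
  then have nz: "\<exists>f\<in>H. beta_i X B r x f \<noteq> 0"
    using cext_r_HX[OF h(1)] by (intro bexI[of _ "cext r h"]) (auto simp: beta_i_def)
  show ?thesis unfolding characters_def
  proof (intro CollectI conjI ballI allI nz)
    show "beta_i X B r x \<in> H \<rightarrow>\<^sub>E UNIV" by (simp add: beta_i_def)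
    fix f g assume f: "f \<in> H" and g: "g \<in> H"
    show "beta_i X B r x (\<lambda>x. f x + g x) = beta_i X B r x f + beta_i X B r x g"
      using HX_add[OF f g] f g by (simp add: beta_i_def)
    show "beta_i X B r x (\<lambda>x. f x * g x) = beta_i X B r x f * beta_i X B r x g"
      using HX_mult[OF f g] f g by (simp add: beta_i_def)
  next
    fix f c assume f: "f \<in> H"
    show "beta_i X B r x (\<lambda>x. c * f x) = c * beta_i X B r x f"
      using HX_scale[OF f] f by (simp add: beta_i_def)
  qed
qed

lemma beta_i_cont: "continuous_map X (betaB X B r) (beta_i X B r)"
  unfolding betaB_def continuous_map_in_subtopology
proof (intro conjI)
  show "beta_i X B r \<in> topspace X \<rightarrow> characters H" using beta_i_char by blast
  show "continuous_map X (product_topology (\<lambda>_. euclidean) H) (beta_i X B r)"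
    unfolding continuous_map_componentwise
  proof (intro conjI ballI)
    show "beta_i X B r ` topspace X \<subseteq> extensional H" by (auto simp: beta_i_def)
    fix g assume g: "g \<in> H"
    have "continuous_map X euclidean g" by (rule Cb_cont[OF HX_Cb[OF g]])
    moreover have "(\<lambda>x. beta_i X B r x g) = g" using g by (simp add: beta_i_def)
    ultimately show "continuous_map X euclidean (\<lambda>x. beta_i X B r x g)" by simp
  qed
qed

lemma ptmap_unique:
  assumes "locally_compact_space Y" "Hausdorff_space Y" "y \<in> topspace Y" "\<forall>k\<in>C0 Y. \<phi> (cext f k) = k y"
  shows "ptmap Y f \<phi> = y"
  unfolding ptmap_def
proof (rule the_equality)
  show "y \<in> topspace Y \<and> (\<forall>k\<in>C0 Y. \<phi> (cext f k) = k y)" using assms by blast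
  fix z assume z: "z \<in> topspace Y \<and> (\<forall>k\<in>C0 Y. \<phi> (cext f k) = k z)"
  show "z = y"
  proof (rule C0_unique_point[OF assms(1,2)])
    show "z \<in> topspace Y" "y \<in> topspace Y" using z assms(3) by auto
    fix k :: "'c \<Rightarrow> complex" assume "k \<in> C0 Y"
    then show "k z = k y" using z assms(4) by metis
  qed
qed

lemma ptmap_prop:
  assumes "locally_compact_space Y" "Hausdorff_space Y" "\<exists>y\<in>topspace Y. \<forall>k\<in>C0 Y. \<phi> (cext f k) = k y"
  shows "ptmap Y f \<phi> \<in> topspace Y \<and> (\<forall>k\<in>C0 Y. \<phi> (cext f k) = k (ptmap Y f \<phi>))"
proof -
  obtain y where y: "y \<in> topspace Y" "\<forall>k\<in>C0 Y. \<phi> (cext f k) = k y" using assms(3) by blast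
  have "ptmap Y f \<phi> = y" by (rule ptmap_unique[OF assms(1,2) y])
  then show ?thesis using y by simp
qed

end

locale tgt = bspLC X B r for X :: "'a topology" and B :: "'b topology" and r +
  fixes Y :: "'c topology" and q :: "'c \<Rightarrow> 'b" and f :: "'a \<Rightarrow> 'c"
  assumes hdY: "Hausdorff_space Y" and qc: "continuous_map Y B q" and qp: "proper_map Y B q"
    and fc: "continuous_map X Y f" and fq: "\<And>x. x \<in> topspace X \<Longrightarrow> q (f x) = r x"
begin

lemma f_top: "x \<in> topspace X \<Longrightarrow> f x \<in> topspace Y"
  using continuous_map_image_subset_topspace[OF fc] by blast

lemma q_top: "y \<in> topspace Y \<Longrightarrow> q y \<in> topspace B"
  using continuous_map_image_subset_topspace[OF qc] by blast

lemma q_pre_compact: "compactin B K \<Longrightarrow> compactin Y {y \<in> topspace Y. q y \<in> K}"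
  using compactin_proper_map_preimage[OF qp] by simp

lemma lcY: "locally_compact_space Y"
  unfolding locally_compact_space_def
proof (intro ballI)
  fix y assume y: "y \<in> topspace Y"
  obtain U K where UK: "openin B U" "compactin B K" "q y \<in> U" "U \<subseteq> K"
    using lcB q_top[OF y] unfolding locally_compact_space_def by blast
  show "\<exists>U K. openin Y U \<and> compactin Y K \<and> y \<in> U \<and> U \<subseteq> K"
  proof (intro exI conjI)
    show "openin Y {z \<in> topspace Y. q z \<in> U}" by (rule openin_continuous_map_preimage[OF qc UK(1)])
    show "compactin Y {z \<in> topspace Y. q z \<in> K}" by (rule q_pre_compact[OF UK(2)])
    show "y \<in> {z \<in> topspace Y. q z \<in> U}" using y UK(3) by simp
    show "{z \<in> topspace Y. q z \<in> U} \<subseteq> {z \<in> topspace Y. q z \<in> K}" using UK(4) by auto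
  qed
qed

definition qext :: "('b \<Rightarrow> complex) \<Rightarrow> 'c \<Rightarrow> complex" where
  "qext h = (\<lambda>y. if y \<in> topspace Y then h (q y) else 0)"

lemma qext_C0: assumes h: "h \<in> C0 B" shows "qext h \<in> C0 Y"
proof (rule C0I)
  have "continuous_map Y euclidean (h \<circ> q)" by (rule continuous_map_compose[OF qc C0_cont[OF h]])
  then show "continuous_map Y euclidean (qext h)"
    by (rule continuous_map_eq) (simp add: qext_def)
  show "\<And>b. b \<notin> topspace Y \<Longrightarrow> qext h b = 0" by (simp add: qext_def)
  fix e :: real assume e: "e > 0"
  show "\<exists>K. compactin Y K \<and> {b \<in> topspace Y. e \<le> norm (qext h b)} \<subseteq> K"
  proof (intro exI conjI)
    show "compactin Y {y \<in> topspace Y. q y \<in> {b \<in> topspace B. e \<le> norm (h b)}}"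
      by (rule q_pre_compact[OF C0_compact[OF h e]])
    show "{b \<in> topspace Y. e \<le> norm (qext h b)} \<subseteq> {y \<in> topspace Y. q y \<in> {b \<in> topspace B. e \<le> norm (h b)}}"
      using q_top by (auto simp: qext_def)
  qed
qed

lemma cext_qext: "cext f (qext h) = cext r h"
  by (auto simp: cext_def qext_def fun_eq_iff f_top fq)

lemma cext_f_HX: assumes k: "k \<in> C0 Y" shows "cext f k \<in> H"
proof -
  obtain Mk where Mk: "Mk \<ge> 0" "\<And>y. y \<in> topspace Y \<Longrightarrow> norm (k y) \<le> Mk" using C0_bound[OF k] by blast
  have cb: "cext f k \<in> Cb X"
  proof (rule CbI[where M=Mk])
    have "continuous_map X euclidean (k \<circ> f)" by (rule continuous_map_compose[OF fc C0_cont[OF k]])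
    then show "continuous_map X euclidean (cext f k)"
      by (rule continuous_map_eq) (simp add: cext_def)
    show "\<And>x. x \<in> topspace X \<Longrightarrow> norm (cext f k x) \<le> Mk" using Mk f_top by (simp add: cext_def)
    show "\<And>x. x \<notin> topspace X \<Longrightarrow> cext f k x = 0" by (simp add: cext_def)
  qed
  show ?thesis
  proof (rule HXI[OF cb])
    fix e :: real assume e: "e > 0"
    define L where "L = {y \<in> topspace Y. e \<le> norm (k y)}"
    have L: "compactin Y L" unfolding L_def by (rule C0_compact[OF k e])
    have qL: "compactin B (q ` L)" by (rule image_compactin[OF L qc])
    obtain h where h: "h \<in> C0 B" "\<And>b. b \<in> q ` L \<Longrightarrow> h b = 1" "\<And>b. Im (h b) = 0"
        "\<And>b. 0 \<le> Re (h b)" "\<And>b. Re (h b) \<le> 1"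
      using urysohn_lch[OF lcB hdB qL openin_topspace[of B]] compactin_subset_topspace[OF qL] by metis
    define s where "s x = cext f k x * h (r x)" for x
    have "s \<in> G" unfolding s_def[abs_def] by (rule GensI[OF cb h(1) refl])
    then have s: "s \<in> fspan G" by (rule fspan_gen)
    have "norm (cext f k x - s x) \<le> e" if x: "x \<in> topspace X" for x
    proof -
      have eq: "cext f k x - s x = k (f x) * (1 - h (r x))"
        using x by (simp add: s_def cext_def algebra_simps)
      have n1: "norm (1 - h (r x)) \<le> 1"
      proof -
        define t where "t = Re (h (r x))"
        have "1 - h (r x) = complex_of_real (1 - t)" using h(3)[of "r x"] by (simp add: complex_eq_iff t_def)
        then have "norm (1 - h (r x)) = \<bar>1 - t\<bar>" by (simp only: norm_of_real)
        then show ?thesis using h(4)[of "r x"] h(5)[of "r x"] by (simp add: t_def)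
      qed
      show ?thesis
      proof (cases "e \<le> norm (k (f x))")
        case True
        then have "f x \<in> L" using f_top[OF x] by (simp add: L_def)
        then have "h (r x) = 1" using h(2) fq[OF x] by (metis image_eqI)
        then show ?thesis using eq e by simp
      next
        case False
        have "norm (cext f k x - s x) = norm (k (f x)) * norm (1 - h (r x))" unfolding eq by (rule norm_mult)
        also have "\<dots> \<le> norm (k (f x)) * 1" using n1 by (intro mult_left_mono) auto
        finally show ?thesis using False by simp
      qed
    qed
    then show "\<exists>s\<in>fspan G. \<forall>x\<in>topspace X. norm (cext f k x - s x) \<le> e" using s by blast
  qed
qed

lemma pt_exists:
  assumes phi: "\<phi> \<in> characters H"
  shows "\<exists>y\<in>topspace Y. \<forall>k\<in>C0 Y. \<phi> (cext f k) = k y"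
proof (rule point_lemma[OF lcY hdY])
  fix k k' assume k: "k \<in> C0 Y" and k': "k' \<in> C0 Y"
  show "\<phi> (cext f (\<lambda>y. k y + k' y)) = \<phi> (cext f k) + \<phi> (cext f k')"
    unfolding cext_add by (rule ch_add[OF phi cext_f_HX[OF k] cext_f_HX[OF k']])
  show "\<phi> (cext f (\<lambda>y. k y * k' y)) = \<phi> (cext f k) * \<phi> (cext f k')"
    unfolding cext_mult by (rule ch_mult[OF phi cext_f_HX[OF k] cext_f_HX[OF k']])
next
  fix k c assume k: "k \<in> C0 Y"
  show "\<phi> (cext f (\<lambda>y. c * k y)) = c * \<phi> (cext f k)"
    unfolding cext_scale by (rule ch_scale[OF phi cext_f_HX[OF k]])
next
  fix k :: "'c \<Rightarrow> complex" and M :: real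
  assume k: "k \<in> C0 Y" and M: "M \<ge> 0" and kM: "\<And>y. y \<in> topspace Y \<Longrightarrow> norm (k y) \<le> M"
  show "norm (\<phi> (cext f k)) \<le> M"
  proof (rule ch_bound[OF phi cext_f_HX[OF k] M])
    fix x assume "x \<in> topspace X"
    then show "norm (cext f k x) \<le> M" using kM f_top by (simp add: cext_def)
  qed
next
  obtain h where h: "h \<in> C0 B" "\<phi> (cext r h) \<noteq> 0" using ch_some_h[OF phi] by blast
  show "\<exists>k\<in>C0 Y. \<phi> (cext f k) \<noteq> 0"
    using qext_C0[OF h(1)] h(2) unfolding cext_qext[symmetric] by blast
qed

lemma pt: "\<phi> \<in> characters H \<Longrightarrow> ptmap Y f \<phi> \<in> topspace Y \<and> (\<forall>k\<in>C0 Y. \<phi> (cext f k) = k (ptmap Y f \<phi>))"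
  by (rule ptmap_prop[OF lcY hdY pt_exists])

lemma pt_i: assumes x: "x \<in> topspace X" shows "ptmap Y f (beta_i X B r x) = f x"
proof (rule ptmap_unique[OF lcY hdY f_top[OF x]])
  show "\<forall>k\<in>C0 Y. beta_i X B r x (cext f k) = k (f x)"
    using cext_f_HX x by (simp add: beta_i_def cext_def)
qed

lemma pt_cont: "continuous_map (betaB X B r) Y (ptmap Y f)"
  unfolding continuous_map_def
proof (intro conjI allI impI)
  show "ptmap Y f \<in> topspace (betaB X B r) \<rightarrow> topspace Y"
    using pt unfolding topspace_betaB by blast
  fix U assume U: "openin Y U"
  show "openin (betaB X B r) {\<phi> \<in> topspace (betaB X B r). ptmap Y f \<phi> \<in> U}"
  proof (subst openin_subopen, intro ballI)
    fix \<phi>0 assume "\<phi>0 \<in> {\<phi> \<in> topspace (betaB X B r). ptmap Y f \<phi> \<in> U}"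
    then have \<phi>0: "\<phi>0 \<in> characters H" "ptmap Y f \<phi>0 \<in> U" unfolding topspace_betaB by auto
    have y0: "ptmap Y f \<phi>0 \<in> topspace Y" using pt[OF \<phi>0(1)] by blast
    obtain k where k: "k \<in> C0 Y" "k (ptmap Y f \<phi>0) = 1" "\<And>z. k z \<noteq> 0 \<Longrightarrow> z \<in> U"
      using urysohn_point[OF lcY hdY y0 U \<phi>0(2)] by blast
    define T where "T = {\<phi> \<in> topspace (betaB X B r). \<phi> (cext f k) \<noteq> 0}"
    show "\<exists>T. openin (betaB X B r) T \<and> \<phi>0 \<in> T \<and> T \<subseteq> {\<phi> \<in> topspace (betaB X B r). ptmap Y f \<phi> \<in> U}"
    proof (intro exI conjI)
      show "openin (betaB X B r) T" unfolding T_def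
        by (rule openin_nonzero[OF ev_cont[OF cext_f_HX[OF k(1)]]])
      show "\<phi>0 \<in> T" unfolding T_def topspace_betaB using \<phi>0(1) pt[OF \<phi>0(1)] k(1,2) by auto
      show "T \<subseteq> {\<phi> \<in> topspace (betaB X B r). ptmap Y f \<phi> \<in> U}"
      proof
        fix \<phi> assume "\<phi> \<in> T"
        then have \<phi>: "\<phi> \<in> characters H" "\<phi> (cext f k) \<noteq> 0" unfolding T_def topspace_betaB by auto
        then have "k (ptmap Y f \<phi>) \<noteq> 0" using pt[OF \<phi>(1)] k(1) by metis
        then show "\<phi> \<in> {\<phi> \<in> topspace (betaB X B r). ptmap Y f \<phi> \<in> U}"
          using k(3) \<phi>(1) unfolding topspace_betaB by blast
      qed
    qed
  qed
qed

lemma pt_q: assumes phi: "\<phi> \<in> characters H" shows "q (ptmap Y f \<phi>) = ptmap B r \<phi>"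
proof (rule sym, rule ptmap_unique[OF lcB hdB])
  have y: "ptmap Y f \<phi> \<in> topspace Y" "\<forall>k\<in>C0 Y. \<phi> (cext f k) = k (ptmap Y f \<phi>)" using pt[OF phi] by auto
  show "q (ptmap Y f \<phi>) \<in> topspace B" using q_top[OF y(1)] .
  show "\<forall>h\<in>C0 B. \<phi> (cext r h) = h (q (ptmap Y f \<phi>))"
  proof
    fix h assume h: "h \<in> C0 B"
    have "\<phi> (cext r h) = \<phi> (cext f (qext h))" by (simp add: cext_qext)
    also have "\<dots> = qext h (ptmap Y f \<phi>)" using y(2) qext_C0[OF h] by blast
    also have "\<dots> = h (q (ptmap Y f \<phi>))" using y(1) by (simp add: qext_def)
    finally show "\<phi> (cext r h) = h (q (ptmap Y f \<phi>))" .
  qed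
qed

end


lemma closedin_eqs:
  fixes a b :: "'j \<Rightarrow> 'p \<Rightarrow> complex"
  assumes "\<And>j. j \<in> J \<Longrightarrow> continuous_map P euclidean (a j)" "\<And>j. j \<in> J \<Longrightarrow> continuous_map P euclidean (b j)"
  shows "closedin P {\<phi> \<in> topspace P. \<forall>j\<in>J. a j \<phi> = b j \<phi>}"
proof -
  have eq: "{\<phi> \<in> topspace P. \<forall>j\<in>J. a j \<phi> = b j \<phi>} = \<Inter> (insert (topspace P) ((\<lambda>j. {\<phi> \<in> topspace P. a j \<phi> = b j \<phi>}) ` J))"
    by auto
  show ?thesis unfolding eq
  proof (rule closedin_Inter)
    fix S assume "S \<in> insert (topspace P) ((\<lambda>j. {\<phi> \<in> topspace P. a j \<phi> = b j \<phi>}) ` J)"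
    then show "closedin P S"
    proof
      assume "S = topspace P" then show ?thesis by simp
    next
      assume "S \<in> (\<lambda>j. {\<phi> \<in> topspace P. a j \<phi> = b j \<phi>}) ` J"
      then obtain j where "j \<in> J" "S = {\<phi> \<in> topspace P. a j \<phi> = b j \<phi>}" by blast
      then show ?thesis using closedin_continuous_maps_eq[OF Hausdorff_space_euclidean assms(1) assms(2)] by simp
    qed
  qed simp
qed

context bspLC
begin

lemma HX_sos:
  assumes phi: "\<phi> \<in> characters H" and S: "finite S" "S \<subseteq> {u\<in>H. \<phi> u = 0}"
  shows "\<exists>P\<in>H. \<phi> P = 0 \<and> (\<forall>x. Im (P x) = 0 \<and> 0 \<le> Re (P x)) \<and> (\<forall>u\<in>S. \<forall>x. (norm (u x))^2 \<le> Re (P x))"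
  using S
proof (induction S rule: finite_induct)
  case empty
  show ?case by (intro bexI[of _ "\<lambda>x. 0"] conjI) (auto simp: ch_zero[OF phi] HX_zero)
next
  case (insert u S)
  then obtain P where P: "P \<in> H" "\<phi> P = 0" "\<forall>x. Im (P x) = 0 \<and> 0 \<le> Re (P x)"
      "\<forall>v\<in>S. \<forall>x. (norm (v x))^2 \<le> Re (P x)" by auto
  have u: "u \<in> H" "\<phi> u = 0" using insert.prems by auto
  have uc: "(\<lambda>x. cnj (u x)) \<in> H" by (rule HX_cnj[OF u(1)])
  have uuc: "(\<lambda>x. u x * cnj (u x)) \<in> H" by (rule HX_mult[OF u(1) uc])
  define P' where "P' x = P x + u x * cnj (u x)" for x
  have eqn: "u x * cnj (u x) = complex_of_real ((norm (u x))^2)" for x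
    by (metis complex_norm_square of_real_power)
  show ?case
  proof (intro bexI[of _ P'] conjI ballI allI)
    show "P' \<in> H" unfolding P'_def[abs_def] by (rule HX_add[OF P(1) uuc])
    have "\<phi> P' = \<phi> P + \<phi> (\<lambda>x. u x * cnj (u x))" unfolding P'_def[abs_def] by (rule ch_add[OF phi P(1) uuc])
    also have "\<dots> = 0" using P(2) ch_mult[OF phi u(1) uc] u(2) by simp
    finally show "\<phi> P' = 0" .
    fix x
    show "Im (P' x) = 0" using P(3) by (simp add: P'_def eqn)
    show "0 \<le> Re (P' x)" using P(3) by (simp add: P'_def eqn)
    fix v assume "v \<in> insert u S"
    then show "(norm (v x))^2 \<le> Re (P' x)"
    proof
      assume "v = u" then show ?thesis using P(3) by (simp add: P'_def eqn)
    next
      assume "v \<in> S" then show ?thesis using P(3,4) by (simp add: P'_def eqn) (smt (verit) zero_le_power2)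
    qed
  qed
qed

lemma approx_point:
  assumes phi: "\<phi>0 \<in> characters H" and J: "finite J" "J \<subseteq> H" and eps: "\<And>g. g \<in> J \<Longrightarrow> \<epsilon> g > 0"
  shows "\<exists>x\<in>topspace X. \<forall>g\<in>J. norm (g x - \<phi>0 g) < \<epsilon> g"
proof -
  obtain g1 where g1: "g1 \<in> H" "\<phi>0 g1 \<noteq> 0" using ch_nz[OF phi] by blast
  define e where "e x = (1 / \<phi>0 g1) * g1 x" for x
  have eH: "e \<in> H" unfolding e_def[abs_def] by (rule HX_scale[OF g1(1)])
  have "\<phi>0 e = (1 / \<phi>0 g1) * \<phi>0 g1" unfolding e_def[abs_def] by (rule ch_scale[OF phi g1(1)])
  then have phie: "\<phi>0 e = 1" using g1(2) by simp
  define Gf where "Gf g = (\<lambda>x. g x - \<phi>0 g * e x)" for g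
  have GfH: "Gf g \<in> H" if "g \<in> H" for g unfolding Gf_def by (rule HX_diff[OF that HX_scale[OF eH]])
  have Gf0: "\<phi>0 (Gf g) = 0" if "g \<in> H" for g
    unfolding Gf_def using ch_diff[OF phi that HX_scale[OF eH]] ch_scale[OF phi eH] phie by simp
  have fin: "finite (Gf ` J)" using J(1) by simp
  have sub: "Gf ` J \<subseteq> {u\<in>H. \<phi>0 u = 0}"
  proof (rule image_subsetI)
    fix g assume "g \<in> J"
    then have "g \<in> H" using J(2) by blast
    then show "Gf g \<in> {u\<in>H. \<phi>0 u = 0}" using GfH Gf0 by simp
  qed
  from HX_sos[OF phi fin sub] obtain P where PH: "P \<in> H" and Pr: "\<phi>0 P = 0 \<and> (\<forall>x. Im (P x) = 0 \<and> 0 \<le> Re (P x)) \<and> (\<forall>u\<in>Gf ` J. \<forall>x. (norm (u x))^2 \<le> Re (P x))"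
    by (elim bexE)
  have P0: "\<phi>0 P = 0" and PIm: "\<And>x. Im (P x) = 0" and PRe: "\<And>x. 0 \<le> Re (P x)"
    and PG: "\<And>g x. g \<in> J \<Longrightarrow> (norm (Gf g x))^2 \<le> Re (P x)" using Pr by simp_all
  define F where "F x = (if x \<in> topspace X then P x + (e x - 1) * cnj (e x - 1) else 0)" for x
  have sq: "(z - 1) * cnj (z - 1) = complex_of_real ((norm (z - 1))^2)" for z :: complex
    by (metis complex_norm_square of_real_power)
  have ReF: "Re (F x) = Re (P x) + (norm (e x - 1))^2" if "x \<in> topspace X" for x
  proof -
    have "F x = P x + complex_of_real ((norm (e x - 1))^2)" unfolding F_def if_P[OF that] sq ..
    then show ?thesis by simp
  qed
  have ImF: "Im (F x) = 0" for x
  proof (cases "x \<in> topspace X")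
    case True
    have "F x = P x + complex_of_real ((norm (e x - 1))^2)" unfolding F_def if_P[OF True] sq ..
    then show ?thesis using PIm[of x] by simp
  qed (simp add: F_def)
  define d where "d g = \<epsilon> g / (2 * (1 + norm (\<phi>0 g)))" for g
  have dpos: "d g > 0" if "g \<in> J" for g
    using eps[OF that] by (simp add: d_def add_pos_nonneg)
  define \<delta> where "\<delta> = Min (insert 1 ((\<lambda>g. (d g)^2) ` J))"
  have \<delta>pos: "\<delta> > 0" unfolding \<delta>_def using J(1) dpos by (simp add: Min_gr_iff) (metis less_irrefl)
  have \<delta>le: "\<delta> \<le> (d g)^2" if "g \<in> J" for g unfolding \<delta>_def using J(1) that by (intro Min_le) auto
  show ?thesis
  proof (cases "\<exists>x\<in>topspace X. Re (F x) < \<delta>")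
    case True
    then obtain x where x: "x \<in> topspace X" "Re (F x) < \<delta>" by blast
    show ?thesis
    proof (intro bexI[OF _ x(1)] ballI)
      fix g assume g: "g \<in> J"
      have a: "(norm (Gf g x))^2 < (d g)^2"
        using PG[OF g, of x] ReF[OF x(1)] x(2) \<delta>le[OF g] by (smt (verit) zero_le_power2)
      have b: "(norm (e x - 1))^2 < (d g)^2"
        using PRe[of x] ReF[OF x(1)] x(2) \<delta>le[OF g] by (smt (verit) zero_le_power2)
      have a': "norm (Gf g x) < d g" by (rule power2_less_imp_less[OF a]) (use dpos[OF g] in simp)
      have b': "norm (e x - 1) < d g" by (rule power2_less_imp_less[OF b]) (use dpos[OF g] in simp)
      have eq: "g x - \<phi>0 g = Gf g x + \<phi>0 g * (e x - 1)" by (simp add: Gf_def algebra_simps)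
      have "norm (g x - \<phi>0 g) \<le> norm (Gf g x) + norm (\<phi>0 g * (e x - 1))"
        unfolding eq by (rule norm_triangle_ineq)
      also have "\<dots> = norm (Gf g x) + norm (\<phi>0 g) * norm (e x - 1)" by (simp add: norm_mult)
      also have "\<dots> \<le> d g + norm (\<phi>0 g) * d g"
        using a' b' by (intro add_mono mult_left_mono) auto
      also have "\<dots> = d g * (1 + norm (\<phi>0 g))" by (simp add: algebra_simps)
      also have "\<dots> = \<epsilon> g / 2"
      proof -
        have "1 + norm (\<phi>0 g) > 0" by (simp add: add_pos_nonneg)
        then show ?thesis unfolding d_def by (simp add: field_simps)
      qed
      also have "\<dots> < \<epsilon> g" using eps[OF g] by simp
      finally show "norm (g x - \<phi>0 g) < \<epsilon> g" .
    qed
  next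
    case False
    then have Fge: "\<And>x. x \<in> topspace X \<Longrightarrow> \<delta> \<le> Re (F x)" by (meson not_less)
    define ce where "ce x = cnj (e x)" for x
    have ceH: "ce \<in> H" unfolding ce_def[abs_def] by (rule HX_cnj[OF eH])
    have h1: "(\<lambda>x. e x * e x) \<in> H" by (rule HX_mult[OF eH eH])
    have h2: "(\<lambda>x. e x * e x * ce x) \<in> H" using HX_mult[OF h1 ceH] by simp
    have h3: "(\<lambda>x. e x * ce x) \<in> H" by (rule HX_mult[OF eH ceH])
    have h4: "(\<lambda>x. e x * e x * ce x - e x * e x) \<in> H" using HX_diff[OF h2 h1] by simp
    have h5: "(\<lambda>x. e x * e x * ce x - e x * e x - e x * ce x) \<in> H" using HX_diff[OF h4 h3] by simp
    have h6: "(\<lambda>x. e x * e x * ce x - e x * e x - e x * ce x + e x) \<in> H" using HX_add[OF h5 eH] by simp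
    have h7: "(\<lambda>x. e x * P x) \<in> H" by (rule HX_mult[OF eH PH])
    have p1: "\<phi>0 (\<lambda>x. e x * e x) = 1" using ch_mult[OF phi eH eH] phie by simp
    have p2: "\<phi>0 (\<lambda>x. e x * e x * ce x) = \<phi>0 ce" using ch_mult[OF phi h1 ceH] p1 by simp
    have p3: "\<phi>0 (\<lambda>x. e x * ce x) = \<phi>0 ce" using ch_mult[OF phi eH ceH] phie by simp
    have p4: "\<phi>0 (\<lambda>x. e x * e x * ce x - e x * e x) = \<phi>0 ce - 1" using ch_diff[OF phi h2 h1] p1 p2 by simp
    have p5: "\<phi>0 (\<lambda>x. e x * e x * ce x - e x * e x - e x * ce x) = -1" using ch_diff[OF phi h4 h3] p3 p4 by simp
    have p6: "\<phi>0 (\<lambda>x. e x * e x * ce x - e x * e x - e x * ce x + e x) = 0" using ch_add[OF phi h5 eH] p5 phie by simp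
    have p7: "\<phi>0 (\<lambda>x. e x * P x) = 0" using ch_mult[OF phi eH PH] P0 by simp
    define eF where "eF x = e x * P x + (e x * e x * ce x - e x * e x - e x * ce x + e x)" for x
    have eFH: "eF \<in> H" unfolding eF_def[abs_def] by (rule HX_add[OF h7 h6])
    have peF: "\<phi>0 eF = 0" unfolding eF_def[abs_def] using ch_add[OF phi h7 h6] p6 p7 by simp
    have eF_eq: "eF x = e x * F x" for x
    proof (cases "x \<in> topspace X")
      case True then show ?thesis by (simp add: eF_def F_def ce_def algebra_simps)
    next
      case False then show ?thesis using HX_out[OF eH False] by (simp add: eF_def F_def)
    qed
    have Fc: "continuous_map X euclidean F"
    proof -
      have ec: "continuous_map X euclidean e" by (rule Cb_cont[OF HX_Cb[OF eH]])
      have Pc: "continuous_map X euclidean P" by (rule Cb_cont[OF HX_Cb[OF PH]])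
      have e1: "continuous_map X euclidean (\<lambda>x. e x - 1)" by (intro continuous_map_diff ec) simp
      have "continuous_map X euclidean (\<lambda>x. P x + (e x - 1) * cnj (e x - 1))"
        by (intro continuous_map_add Pc cm_mult e1 cm_cnj)
      then show ?thesis by (rule continuous_map_eq) (simp add: F_def)
    qed
    define iF where "iF x = (if x \<in> topspace X then complex_of_real (inverse (Re (F x))) else 0)" for x
    have iF: "iF \<in> Cb X"
    proof (rule CbI[where M="inverse \<delta>"])
      have "continuous_map X euclideanreal (\<lambda>x. inverse (Re (F x)))"
      proof (rule continuous_map_real_inverse)
        show "continuous_map X euclideanreal (\<lambda>x. Re (F x))" by (rule cm_Re[OF Fc])
        show "\<And>x. x \<in> topspace X \<Longrightarrow> Re (F x) \<noteq> 0" using Fge \<delta>pos by (metis not_le order.strict_trans2 less_irrefl)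
      qed
      then have "continuous_map X euclidean (\<lambda>x. complex_of_real (inverse (Re (F x))))" by (rule cm_of_real)
      then show "continuous_map X euclidean iF" by (rule continuous_map_eq) (simp add: iF_def)
      fix x assume x: "x \<in> topspace X"
      have pos: "Re (F x) > 0" using Fge[OF x] \<delta>pos by simp
      have "inverse (Re (F x)) \<le> inverse \<delta>" using Fge[OF x] \<delta>pos by (intro le_imp_inverse_le) auto
      moreover have "norm (iF x) = inverse (Re (F x))" using x pos
        unfolding iF_def by (simp only: if_True norm_of_real) simp
      ultimately show "norm (iF x) \<le> inverse \<delta>" by simp
    qed (simp add: iF_def)
    define eI where "eI x = iF x * e x" for x
    have eIH: "eI \<in> H" unfolding eI_def[abs_def] by (rule HX_ideal[OF iF eH])
    have prod: "(\<lambda>x. eF x * eI x) = (\<lambda>x. e x * e x)"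
    proof
      fix x show "eF x * eI x = e x * e x"
      proof (cases "x \<in> topspace X")
        case True
        have pos: "Re (F x) > 0" using Fge[OF True] \<delta>pos by simp
        define t where "t = Re (F x)"
        have Fx: "F x = complex_of_real t" using ImF[of x] by (simp add: complex_eq_iff t_def)
        have iFx: "iF x = complex_of_real (inverse t)" using True by (simp add: iF_def t_def)
        have "F x * iF x = complex_of_real (t * inverse t)" unfolding Fx iFx of_real_mult ..
        also have "\<dots> = 1" using pos by (simp add: t_def)
        finally have "F x * iF x = 1" .
        then show ?thesis by (simp add: eF_eq eI_def)
      next
        case False then show ?thesis using HX_out[OF eH False] by (simp add: eF_eq eI_def)
      qed
    qed
    have "\<phi>0 (\<lambda>x. eF x * eI x) = \<phi>0 eF * \<phi>0 eI" by (rule ch_mult[OF phi eFH eIH])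
    then have "\<phi>0 (\<lambda>x. e x * e x) = 0" using peF prod by simp
    then show ?thesis using p1 by simp
  qed
qed

lemma dense: assumes phi: "\<phi>0 \<in> characters H"
  shows "\<phi>0 \<in> betaB X B r closure_of (beta_i X B r ` topspace X)"
  unfolding in_closure_of
proof (intro conjI allI impI)
  show "\<phi>0 \<in> topspace (betaB X B r)" using phi by (simp add: topspace_betaB)
  fix T assume T: "\<phi>0 \<in> T \<and> openin (betaB X B r) T"
  then obtain T' where T': "openin (product_topology (\<lambda>_. euclidean) H) T'" "T = T' \<inter> characters H"
    unfolding betaB_def openin_subtopology by blast
  have "\<phi>0 \<in> T'" using T T' by blast
  then have "\<exists>U. finite {g \<in> H. U g \<noteq> topspace euclidean} \<and> (\<forall>g\<in>H. openin euclidean (U g)) \<and> \<phi>0 \<in> Pi\<^sub>E H U \<and> Pi\<^sub>E H U \<subseteq> T'"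
    using T'(1) unfolding openin_product_topology_alt by blast
  then obtain U where U: "finite {g \<in> H. U g \<noteq> UNIV}" "\<And>g. g \<in> H \<Longrightarrow> open (U g)" "\<phi>0 \<in> Pi\<^sub>E H U" "Pi\<^sub>E H U \<subseteq> T'"
    by auto
  define J where "J = {g \<in> H. U g \<noteq> UNIV}"
  define \<epsilon> where "\<epsilon> g = (SOME e. e > 0 \<and> ball (\<phi>0 g) e \<subseteq> U g)" for g
  have \<epsilon>: "\<epsilon> g > 0 \<and> ball (\<phi>0 g) (\<epsilon> g) \<subseteq> U g" if "g \<in> H" for g
  proof -
    have "\<phi>0 g \<in> U g" using U(3) that by (simp add: PiE_iff)
    then have "\<exists>e. e > 0 \<and> ball (\<phi>0 g) e \<subseteq> U g" using U(2)[OF that] open_contains_ball by blast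
    then show ?thesis unfolding \<epsilon>_def by (rule someI_ex)
  qed
  obtain x where x: "x \<in> topspace X" "\<And>g. g \<in> J \<Longrightarrow> norm (g x - \<phi>0 g) < \<epsilon> g"
    using approx_point[OF phi, of J \<epsilon>] U(1) \<epsilon> unfolding J_def by auto
  show "\<exists>y. y \<in> beta_i X B r ` topspace X \<and> y \<in> T"
  proof (intro exI conjI)
    show "beta_i X B r x \<in> beta_i X B r ` topspace X" using x(1) by blast
    have "beta_i X B r x \<in> Pi\<^sub>E H U"
      unfolding PiE_iff
    proof (intro conjI ballI)
      fix g assume g: "g \<in> H"
      show "beta_i X B r x g \<in> U g"
      proof (cases "g \<in> J")
        case True
        then have "dist (\<phi>0 g) (g x) < \<epsilon> g" using x(2)[OF True] by (simp add: dist_norm norm_minus_commute[of "\<phi>0 g"])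
        then have "g x \<in> U g" using \<epsilon>[OF g] by auto
        then show ?thesis using g by (simp add: beta_i_def)
      next
        case False then show ?thesis using g by (simp add: J_def)
      qed
    qed (simp add: beta_i_def)
    then show "beta_i X B r x \<in> T" using U(4) T'(2) beta_i_char[OF x(1)] by blast
  qed
qed

lemma tgtB: "tgt X B r B id r"
  by unfold_locales (simp_all add: r lcB hdB)

lemma rho_cont: "continuous_map (betaB X B r) B (ptmap B r)"
  using tgt.pt_cont[OF tgtB] .

lemma rho_i: "x \<in> topspace X \<Longrightarrow> ptmap B r (beta_i X B r x) = r x"
  using tgt.pt_i[OF tgtB] .

lemma rho_pt: "\<phi> \<in> characters H \<Longrightarrow> ptmap B r \<phi> \<in> topspace B \<and> (\<forall>h\<in>C0 B. \<phi> (cext r h) = h (ptmap B r \<phi>))"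
  using tgt.pt[OF tgtB] .

end


context bspLC
begin

abbreviation "PT \<equiv> product_topology (\<lambda>_::('a \<Rightarrow> complex). (euclidean :: complex topology)) H"

lemma PT_proj: "g \<in> H \<Longrightarrow> continuous_map PT euclidean (\<lambda>\<phi>. \<phi> g)"
  by (rule continuous_map_product_projection[where X="\<lambda>_. euclidean", simplified])

lemma rho_pre_compact:
  assumes K: "compactin B K"
  shows "compactin (betaB X B r) {\<phi> \<in> topspace (betaB X B r). ptmap B r \<phi> \<in> K}"
proof -
  obtain h where h: "h \<in> C0 B" "\<And>b. b \<in> K \<Longrightarrow> h b = 1"
    using urysohn_lch[OF lcB hdB K openin_topspace[of B]] compactin_subset_topspace[OF K] by metis
  define g0 where "g0 = cext r h"
  have g0: "g0 \<in> H" unfolding g0_def by (rule cext_r_HX[OF h(1)])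
  define bnd where "bnd g = (SOME M. M \<ge> 0 \<and> (\<forall>x\<in>topspace X. norm (g x) \<le> M))" for g :: "'a \<Rightarrow> complex"
  have bnd: "bnd g \<ge> 0 \<and> (\<forall>x\<in>topspace X. norm (g x) \<le> bnd g)" if gH: "g \<in> H" for g
  proof -
    obtain M where "M \<ge> 0" "\<And>x. x \<in> topspace X \<Longrightarrow> norm (g x) \<le> M" using HX_bound[OF gH] by blast
    then have "\<exists>M. M \<ge> 0 \<and> (\<forall>x\<in>topspace X. norm (g x) \<le> M)" by blast
    then show ?thesis unfolding bnd_def by (rule someI_ex)
  qed
  define Box where "Box = Pi\<^sub>E H (\<lambda>g. cball (0::complex) (bnd g))"
  have Boxc: "compactin PT Box" unfolding Box_def compactin_PiE
    by (simp add: compactin_euclidean_iff)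
  have hdPT: "Hausdorff_space PT" by (simp add: Hausdorff_space_product_topology)
  have Boxcl: "closedin PT Box" by (rule compactin_imp_closedin[OF hdPT Boxc])
  define A1 where "A1 = {\<phi> \<in> topspace PT. \<forall>j\<in>H \<times> H. \<phi> (\<lambda>x. fst j x + snd j x) = \<phi> (fst j) + \<phi> (snd j)}"
  define A2 where "A2 = {\<phi> \<in> topspace PT. \<forall>j\<in>H \<times> UNIV. \<phi> (\<lambda>x. snd j * fst j x) = snd j * \<phi> (fst j)}"
  define A3 where "A3 = {\<phi> \<in> topspace PT. \<forall>j\<in>H \<times> H. \<phi> (\<lambda>x. fst j x * snd j x) = \<phi> (fst j) * \<phi> (snd j)}"
  define A4 where "A4 = {\<phi> \<in> topspace PT. \<phi> g0 = 1}"
  have A1: "closedin PT A1" unfolding A1_def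
  proof (rule closedin_eqs)
    fix j :: "('a \<Rightarrow> complex) \<times> ('a \<Rightarrow> complex)" assume j: "j \<in> H \<times> H"
    then have f: "fst j \<in> H" "snd j \<in> H" by auto
    show "continuous_map PT euclidean (\<lambda>\<phi>. \<phi> (\<lambda>x. fst j x + snd j x))"
      by (rule PT_proj[OF HX_add[OF f]])
    show "continuous_map PT euclidean (\<lambda>\<phi>. \<phi> (fst j) + \<phi> (snd j))"
      by (rule continuous_map_add[OF PT_proj[OF f(1)] PT_proj[OF f(2)]])
  qed
  have A2: "closedin PT A2" unfolding A2_def
  proof (rule closedin_eqs)
    fix j :: "('a \<Rightarrow> complex) \<times> complex" assume j: "j \<in> H \<times> UNIV"
    then have f: "fst j \<in> H" by auto
    show "continuous_map PT euclidean (\<lambda>\<phi>. \<phi> (\<lambda>x. snd j * fst j x))"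
      by (rule PT_proj[OF HX_scale[OF f]])
    show "continuous_map PT euclidean (\<lambda>\<phi>. snd j * \<phi> (fst j))"
      by (rule cm_mult[OF _ PT_proj[OF f]]) simp
  qed
  have A3: "closedin PT A3" unfolding A3_def
  proof (rule closedin_eqs)
    fix j :: "('a \<Rightarrow> complex) \<times> ('a \<Rightarrow> complex)" assume j: "j \<in> H \<times> H"
    then have f: "fst j \<in> H" "snd j \<in> H" by auto
    show "continuous_map PT euclidean (\<lambda>\<phi>. \<phi> (\<lambda>x. fst j x * snd j x))"
      by (rule PT_proj[OF HX_mult[OF f]])
    show "continuous_map PT euclidean (\<lambda>\<phi>. \<phi> (fst j) * \<phi> (snd j))"
      by (rule cm_mult[OF PT_proj[OF f(1)] PT_proj[OF f(2)]])
  qed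
  have A4: "closedin PT A4" unfolding A4_def
    by (rule closedin_continuous_maps_eq[OF Hausdorff_space_euclidean PT_proj[OF g0]]) simp
  define T where "T = Box \<inter> A1 \<inter> A2 \<inter> A3 \<inter> A4"
  have Tcl: "closedin PT T" unfolding T_def using Boxcl A1 A2 A3 A4 by (intro closedin_Int)
  have Tc: "compactin PT T" by (rule closed_compactin[OF Boxc _ Tcl]) (auto simp: T_def)
  have Tch: "T \<subseteq> characters H"
  proof
    fix \<phi> assume "\<phi> \<in> T"
    then have \<phi>: "\<phi> \<in> Box" "\<phi> \<in> A1" "\<phi> \<in> A2" "\<phi> \<in> A3" "\<phi> \<in> A4" by (auto simp: T_def)
    show "\<phi> \<in> characters H" unfolding characters_def
    proof (intro CollectI conjI ballI allI)
      show "\<phi> \<in> H \<rightarrow>\<^sub>E UNIV" using \<phi>(1) by (simp add: Box_def PiE_iff)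
      fix f g assume f: "f \<in> H" and g: "g \<in> H"
      show "\<phi> (\<lambda>x. f x + g x) = \<phi> f + \<phi> g" using \<phi>(2) f g unfolding A1_def by auto
      show "\<phi> (\<lambda>x. f x * g x) = \<phi> f * \<phi> g" using \<phi>(4) f g unfolding A3_def by auto
    next
      fix f c assume f: "f \<in> H"
      show "\<phi> (\<lambda>x. c * f x) = c * \<phi> f" using \<phi>(3) f unfolding A2_def by auto
    next
      have "\<phi> g0 = 1" using \<phi>(5) unfolding A4_def by simp
      then show "\<exists>f\<in>H. \<phi> f \<noteq> 0" using g0 by (intro bexI[of _ g0]) simp_all
    qed
  qed
  define Pre where "Pre = {\<phi> \<in> topspace (betaB X B r). ptmap B r \<phi> \<in> K}"
  have Pre_cl: "closedin (betaB X B r) Pre" unfolding Pre_def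
    by (rule closedin_continuous_map_preimage[OF rho_cont compactin_imp_closedin[OF hdB K]])
  then obtain C where C: "closedin PT C" "Pre = C \<inter> characters H"
    unfolding betaB_def closedin_subtopology by blast
  have PreT: "Pre \<subseteq> T"
  proof
    fix \<phi> assume "\<phi> \<in> Pre"
    then have \<phi>: "\<phi> \<in> characters H" "ptmap B r \<phi> \<in> K" unfolding Pre_def topspace_betaB by auto
    have tp: "\<phi> \<in> topspace PT" using ch_PiE[OF \<phi>(1)] by (simp add: topspace_product_topology)
    have "\<phi> \<in> Box" unfolding Box_def PiE_iff
    proof (intro conjI ballI)
      fix g assume g: "g \<in> H"
      have "norm (\<phi> g) \<le> bnd g" using ch_bound[OF \<phi>(1) g] bnd[OF g] by blast
      then show "\<phi> g \<in> cball 0 (bnd g)" by simp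
    qed (use ch_PiE[OF \<phi>(1)] in \<open>simp add: PiE_iff\<close>)
    moreover have "\<phi> \<in> A1" unfolding A1_def using tp ch_add[OF \<phi>(1)] by auto
    moreover have "\<phi> \<in> A2" unfolding A2_def using tp ch_scale[OF \<phi>(1)] by auto
    moreover have "\<phi> \<in> A3" unfolding A3_def using tp ch_mult[OF \<phi>(1)] by auto
    moreover have "\<phi> \<in> A4"
    proof -
      have "\<phi> g0 = h (ptmap B r \<phi>)" unfolding g0_def using rho_pt[OF \<phi>(1)] h(1) by blast
      then show ?thesis unfolding A4_def using tp h(2)[OF \<phi>(2)] by simp
    qed
    ultimately show "\<phi> \<in> T" by (simp add: T_def)
  qed
  have PreCT: "Pre = C \<inter> T" using C(2) PreT Tch by blast
  have "compactin PT Pre" unfolding PreCT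
    by (rule closed_compactin[OF Tc _ closedin_Int[OF C(1) Tcl]]) simp
  moreover have "Pre \<subseteq> characters H" using C(2) by blast
  ultimately have "compactin (betaB X B r) Pre" unfolding betaB_def by (simp add: compactin_subtopology)
  then show ?thesis unfolding Pre_def .
qed

end


theorem theorem4p11:
  fixes B :: "'b topology" and X :: "'a topology" and r :: "'a \<Rightarrow> 'b"
  assumes "locally_compact_space B" and "Hausdorff_space B"
    and "continuous_map X B r"
  shows "Hausdorff_space (betaB X B r)
         \<and> continuous_map (betaB X B r) B (beta_r X B r)
         \<and> proper_map (betaB X B r) B (beta_r X B r)
         \<and> continuous_map X (betaB X B r) (beta_i X B r)
         \<and> (\<forall>x\<in>topspace X. beta_r X B r (beta_i X B r x) = r x)
         \<and> (\<forall>(X' :: 'c topology) r' f.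
              Hausdorff_space X' \<and> continuous_map X' B r' \<and> proper_map X' B r'
              \<and> continuous_map X X' f \<and> (\<forall>x\<in>topspace X. r' (f x) = r x)
              \<longrightarrow> (\<exists>f'. (continuous_map (betaB X B r) X' f'
                         \<and> (\<forall>p\<in>topspace (betaB X B r). r' (f' p) = beta_r X B r p)
                         \<and> (\<forall>x\<in>topspace X. f' (beta_i X B r x) = f x))
                       \<and> (\<forall>g. continuous_map (betaB X B r) X' g
                         \<and> (\<forall>p\<in>topspace (betaB X B r). r' (g p) = beta_r X B r p)
                         \<and> (\<forall>x\<in>topspace X. g (beta_i X B r x) = f x)
                         \<longrightarrow> (\<forall>p\<in>topspace (betaB X B r). g p = f' p))))"
proof -
  interpret bspLC X B r by unfold_locales (simp_all add: assms)
  have hd: "Hausdorff_space (betaB X B r)" unfolding betaB_def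
    by (intro Hausdorff_space_subtopology) (simp add: Hausdorff_space_product_topology)
  have Qc: "continuous_map (betaB X B r) B (ptmap B r)" by (rule rho_cont)
  have Qi: "\<And>x. x \<in> topspace X \<Longrightarrow> ptmap B r (beta_i X B r x) = r x" by (rule rho_i)
  have "\<exists>q. continuous_map (betaB X B r) B q \<and> (\<forall>x\<in>topspace X. q (beta_i X B r x) = r x)"
    using Qc Qi by blast
  then have q: "continuous_map (betaB X B r) B (beta_r X B r) \<and> (\<forall>x\<in>topspace X. beta_r X B r (beta_i X B r x) = r x)"
    unfolding beta_r_def by (rule someI_ex)
  have qc: "continuous_map (betaB X B r) B (beta_r X B r)" using q by blast
  have qi: "\<And>x. x \<in> topspace X \<Longrightarrow> beta_r X B r (beta_i X B r x) = r x" using q by blast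
  have dense': "p \<in> betaB X B r closure_of (beta_i X B r ` topspace X)" if "p \<in> topspace (betaB X B r)" for p
    using dense that by (simp add: topspace_betaB)
  have eqr: "beta_r X B r p = ptmap B r p" if p: "p \<in> topspace (betaB X B r)" for p
  proof (rule forall_in_closure_of_eq[OF dense'[OF p] assms(2) qc Qc])
    fix y assume "y \<in> beta_i X B r ` topspace X"
    then obtain x where "x \<in> topspace X" "y = beta_i X B r x" by blast
    then show "beta_r X B r y = ptmap B r y" using qi Qi by simp
  qed
  have proper: "proper_map (betaB X B r) B (beta_r X B r)"
  proof (rule compact_imp_proper_map)
    show "k_space B" by (rule locally_compact_imp_k_space[OF assms(1)])
    show "kc_space B" by (rule Hausdorff_imp_kc_space[OF assms(2)])
    show "beta_r X B r \<in> topspace (betaB X B r) \<rightarrow> topspace B"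
      using qc by (simp add: continuous_map_def)
    show "continuous_map (betaB X B r) B (beta_r X B r) \<or> kc_space (betaB X B r)" using qc by blast
    fix K assume K: "compactin B K"
    have "{p \<in> topspace (betaB X B r). beta_r X B r p \<in> K} = {p \<in> topspace (betaB X B r). ptmap B r p \<in> K}"
      using eqr by auto
    then show "compactin (betaB X B r) {p \<in> topspace (betaB X B r). beta_r X B r p \<in> K}"
      using rho_pre_compact[OF K] by simp
  qed
  have univ: "\<forall>(X' :: 'c topology) r' f.
              Hausdorff_space X' \<and> continuous_map X' B r' \<and> proper_map X' B r'
              \<and> continuous_map X X' f \<and> (\<forall>x\<in>topspace X. r' (f x) = r x)
              \<longrightarrow> (\<exists>f'. (continuous_map (betaB X B r) X' f'
                         \<and> (\<forall>p\<in>topspace (betaB X B r). r' (f' p) = beta_r X B r p)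
                         \<and> (\<forall>x\<in>topspace X. f' (beta_i X B r x) = f x))
                       \<and> (\<forall>g. continuous_map (betaB X B r) X' g
                         \<and> (\<forall>p\<in>topspace (betaB X B r). r' (g p) = beta_r X B r p)
                         \<and> (\<forall>x\<in>topspace X. g (beta_i X B r x) = f x)
                         \<longrightarrow> (\<forall>p\<in>topspace (betaB X B r). g p = f' p)))"
  proof (intro allI impI)
    fix X' :: "'c topology" and r' f
    assume A: "Hausdorff_space X' \<and> continuous_map X' B r' \<and> proper_map X' B r'
              \<and> continuous_map X X' f \<and> (\<forall>x\<in>topspace X. r' (f x) = r x)"
    interpret T: tgt X B r X' r' f by unfold_locales (use A assms in auto)
    have c1: "continuous_map (betaB X B r) X' (ptmap X' f)" by (rule T.pt_cont)
    have c2: "\<forall>p\<in>topspace (betaB X B r). r' (ptmap X' f p) = beta_r X B r p"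
    proof
      fix p assume p: "p \<in> topspace (betaB X B r)"
      then have "p \<in> characters H" by (simp add: topspace_betaB)
      then show "r' (ptmap X' f p) = beta_r X B r p" using T.pt_q eqr[OF p] by simp
    qed
    have c3: "\<forall>x\<in>topspace X. ptmap X' f (beta_i X B r x) = f x" using T.pt_i by blast
    have c4: "\<forall>p\<in>topspace (betaB X B r). g p = ptmap X' f p"
      if g: "continuous_map (betaB X B r) X' g
                         \<and> (\<forall>p\<in>topspace (betaB X B r). r' (g p) = beta_r X B r p)
                         \<and> (\<forall>x\<in>topspace X. g (beta_i X B r x) = f x)" for g
    proof
      fix p assume p: "p \<in> topspace (betaB X B r)"
      have gc: "continuous_map (betaB X B r) X' g" using g by blast
      show "g p = ptmap X' f p"
      proof (rule forall_in_closure_of_eq[OF dense'[OF p] T.hdY gc c1])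
        fix y assume "y \<in> beta_i X B r ` topspace X"
        then obtain x where "x \<in> topspace X" "y = beta_i X B r x" by blast
        then show "g y = ptmap X' f y" using g c3 by simp
      qed
    qed
    show "\<exists>f'. (continuous_map (betaB X B r) X' f'
                         \<and> (\<forall>p\<in>topspace (betaB X B r). r' (f' p) = beta_r X B r p)
                         \<and> (\<forall>x\<in>topspace X. f' (beta_i X B r x) = f x))
                       \<and> (\<forall>g. continuous_map (betaB X B r) X' g
                         \<and> (\<forall>p\<in>topspace (betaB X B r). r' (g p) = beta_r X B r p)
                         \<and> (\<forall>x\<in>topspace X. g (beta_i X B r x) = f x)
                         \<longrightarrow> (\<forall>p\<in>topspace (betaB X B r). g p = f' p))"
      using c1 c2 c3 c4 by blast
  qed
  show ?thesis using hd qc proper beta_i_cont qi univ by blast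
qed


end
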